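(* Any CPWL function $p\colon\mathbb{R}^n\to\mathbb{R}$ with $k$ distinct linear components can be represented by a ReLU network whose number of layers $l$, maximum width $w$, and number of hidden neurons $h$ satisfy $l\leq\lceil\log_2\phi(n,k)\rceil+\lceil\log_2k\rceil+1$, $w\leq\mathbb{I}[k>1]\left\lceil\frac{3k}{2}\right\rceil \phi(n,k)$, and $h\leq \left(3\cdot 2^{\lceil\log_2k\rceil}+2\lceil\log_2k\rceil-3\right)\phi(n,k)+3\cdot 2^{\lceil\log_2\phi(n,k)\rceil}-2\lceil\log_2k\rceil-3,$ where $\phi(n,k)=\min\left(\sum_{i=0}^n \binom{(k^2-k)/2}{i},\,k!\right)$.
   Context: A function $p\colon\mathbb{R}^n\to\mathbb{R}$ is CPWL (continuous piecewise linear) if there exist finitely many closed subsets $\mathcal{U}_1,\dots,\mathcal{U}_m$ of $\mathbb{R}^n$ whose union is $\mathbb{R}^n$ and such that $p$ is affine on each $\mathcal{U}_i$. An affine function $f$ is a linear component of $p$ if $f=p$ on a union of some nonempty subfamily of a minimum-size family of such closed subsets; $k$ is the number of distinct linear components. $\mathbb{I}[\cdot]$ is the indicator function. An $l$-layer ReLU network $g\colon\mathbb{R}^{k_0}\to\mathbb{R}^{k_l}$ is $g=h_l$ with $h_1(\mathbf{x})=\mathbf{W}_1\mathbf{x}+\mathbf{b}_1$ and $h_i(\mathbf{x})=\mathbf{W}_i\sigma(h_{i-1}(\mathbf{x}))+\mathbf{b}_i$, where $\sigma(x)=\max(0,x)$ is applied coordinatewise and $\mathbf{W}_i\in\mathbb{R}^{k_i\times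 k_{i-1}}$. Its number of hidden neurons is $\sum_{i=1}^{l-1}k_i$ and its maximum width is $\max_{i\in[l-1]}k_i$ (both $0$ when $l=1$); its number of layers is $l$. *)

theory Defs
  imports "HOL-Analysis.Analysis"
begin

definition affine_fun :: "(real^'n \<Rightarrow> real) \<Rightarrow> bool" where
  "affine_fun f \<longleftrightarrow> (\<exists>a b. \<forall>x. f x = a \<bullet> x + b)"

definition cpwl_cover :: "(real^'n \<Rightarrow> real) \<Rightarrow> nat \<Rightarrow> (nat \<Rightarrow> (real^'n) set) \<Rightarrow> bool" where
  "cpwl_cover p m U \<longleftrightarrow>
     (\<forall>i<m. closed (U i)) \<and> (\<Union>i<m. U i) = UNIV \<and>
     (\<forall>i<m. \<exists>f. affine_fun f \<and> (\<forall>x\<in>U i. p x = f x))"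

definition is_cpwl :: "(real^'n \<Rightarrow> real) \<Rightarrow> bool" where
  "is_cpwl p \<longleftrightarrow> continuous_on UNIV p \<and> (\<exists>m U. cpwl_cover p m U)"

definition min_cover_size :: "(real^'n \<Rightarrow> real) \<Rightarrow> nat" where
  "min_cover_size p = (LEAST m. \<exists>U. cpwl_cover p m U)"

definition linear_components :: "(real^'n \<Rightarrow> real) \<Rightarrow> (real^'n \<Rightarrow> real) set" where
  "linear_components p = {f. affine_fun f \<and>
     (\<exists>U S. cpwl_cover p (min_cover_size p) U \<and> S \<subseteq> {..<min_cover_size p} \<and> S \<noteq> {} \<and>
            (\<forall>x\<in>(\<Union>i\<in>S. U i). p x = f x))}"

definition num_components :: "(real^'n \<Rightarrow> real) \<Rightarrow> nat" where
  "num_components p = card (linear_components p)"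

definition relu :: "real \<Rightarrow> real" where
  "relu x = max 0 x"

text \<open>Layers 2..l: each layer is (W_i, b_i); the list ks = [k_1, ..., k_(l-1)] holds the
  hidden widths, and the sum runs over the k_(i-1) coordinates of the previous layer.\<close>
fun eval_layers :: "nat list \<Rightarrow> ((nat \<Rightarrow> nat \<Rightarrow> real) \<times> (nat \<Rightarrow> real)) list \<Rightarrow> (nat \<Rightarrow> real) \<Rightarrow> (nat \<Rightarrow> real)" where
  "eval_layers (k # ks) ((W, b) # Ls) v = eval_layers ks Ls (\<lambda>j. (\<Sum>t<k. W j t * relu (v t)) + b j)"
| "eval_layers _ _ v = v"

text \<open>Network with input R^n and output R (k_l = 1): first layer W_1 x + b_1 with rows W1 j,
  output is coordinate 0 of h_l.\<close>
definition relu_net_eval :: "nat list \<Rightarrow> (nat \<Rightarrow> real^'n) \<Rightarrow> (nat \<Rightarrow> real)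
     \<Rightarrow> ((nat \<Rightarrow> nat \<Rightarrow> real) \<times> (nat \<Rightarrow> real)) list \<Rightarrow> real^'n \<Rightarrow> real" where
  "relu_net_eval ks W1 b1 Ls x = eval_layers ks Ls (\<lambda>j. W1 j \<bullet> x + b1 j) 0"

definition relu_net_wf :: "nat list \<Rightarrow> ((nat \<Rightarrow> nat \<Rightarrow> real) \<times> (nat \<Rightarrow> real)) list \<Rightarrow> bool" where
  "relu_net_wf ks Ls \<longleftrightarrow> length ks = length Ls \<and> (\<forall>k\<in>set ks. 0 < k)"

definition num_layers :: "nat list \<Rightarrow> nat" where
  "num_layers ks = length ks + 1"

definition max_width :: "nat list \<Rightarrow> nat" where
  "max_width ks = foldr max ks 0"

definition hidden_neurons :: "nat list \<Rightarrow> nat" where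
  "hidden_neurons ks = sum_list ks"

definition phi :: "nat \<Rightarrow> nat \<Rightarrow> nat" where
  "phi n k = min (\<Sum>i\<le>n. ((k^2 - k) div 2) choose i) (fact k)"

end

theory Submission
  imports Defs "HOL-Combinatorics.Permutations"
begin

definition computes :: "nat list \<Rightarrow> ((nat \<Rightarrow> nat \<Rightarrow> real) \<times> (nat \<Rightarrow> real)) list \<Rightarrow> nat \<Rightarrow> ((nat \<Rightarrow> real) \<Rightarrow> real) \<Rightarrow> bool" where
  "computes ks Ls m F \<longleftrightarrow> relu_net_wf ks Ls \<and>
     (\<exists>A a0. \<forall>v. eval_layers ks Ls (\<lambda>j. (\<Sum>i<m. A j i * v i) + a0 j) 0 = F v)"

lemma delta_sum: "(\<Sum>i<(m::nat). (if i = a then (1::real) else 0) * v i) = (if a < m then v a else 0)"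
proof -
  have "(\<Sum>i<m. (if i = a then (1::real) else 0) * v i) = (\<Sum>i<m. (if a = i then v i else 0))"
    by (rule sum.cong) auto
  also have "\<dots> = (if a \<in> {..<m} then v a else 0)"
    by (subst sum.delta') auto
  finally show ?thesis by simp
qed

lemma computes_base:
  assumes "m \<ge> 1"
  shows "computes [] [] m (\<lambda>v. v 0)"
proof -
  have "\<forall>v. eval_layers [] [] (\<lambda>j. (\<Sum>i<m. (if i = j then 1 else 0) * v i) + 0) 0 = v 0"
    using assms by (simp only: delta_sum) simp
  then show ?thesis unfolding computes_def relu_net_wf_def
    by (intro conjI exI[of _ "\<lambda>j i. if i = j then 1 else 0"] exI[of _ "\<lambda>j. 0"]) auto
qed

lemma computes_layer:
  assumes comp: "computes ks Ls m' F"
    and H: "\<And>v i. i < m' \<Longrightarrow> H v i = (\<Sum>t<c. B i t * relu ((\<Sum>j<m. Q t j * v j) + qq t)) + b i"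
    and c: "c > 0"
  shows "\<exists>Ls'. computes (c # ks) Ls' m (\<lambda>v. F (H v))"
proof -
  from comp obtain A a0 where wf: "relu_net_wf ks Ls"
    and ev: "\<And>v. eval_layers ks Ls (\<lambda>j. (\<Sum>i<m'. A j i * v i) + a0 j) 0 = F v"
    unfolding computes_def by blast
  define W where "W j t = (\<Sum>i<m'. A j i * B i t)" for j t
  define bb where "bb j = (\<Sum>i<m'. A j i * b i) + a0 j" for j
  have "eval_layers (c # ks) ((W, bb) # Ls) (\<lambda>t. (\<Sum>j<m. Q t j * v j) + qq t) 0 = F (H v)" for v
  proof -
    define r where "r t = relu ((\<Sum>j<m. Q t j * v j) + qq t)" for t
    have "(\<lambda>j. (\<Sum>t<c. W j t * r t) + bb j) = (\<lambda>j. (\<Sum>i<m'. A j i * H v i) + a0 j)"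
    proof
      fix j
      have "(\<Sum>i<m'. A j i * H v i) = (\<Sum>i<m'. A j i * ((\<Sum>t<c. B i t * r t) + b i))"
        by (rule sum.cong) (auto simp: H r_def)
      also have "\<dots> = (\<Sum>i<m'. \<Sum>t<c. A j i * B i t * r t) + (\<Sum>i<m'. A j i * b i)"
        by (simp add: distrib_left sum.distrib sum_distrib_left mult.assoc)
      also have "\<dots> = (\<Sum>t<c. W j t * r t) + (\<Sum>i<m'. A j i * b i)"
        unfolding W_def by (simp add: sum.swap[of _ "{..<m'}"] sum_distrib_right)
      finally show "(\<Sum>t<c. W j t * r t) + bb j = (\<Sum>i<m'. A j i * H v i) + a0 j"
        by (simp add: bb_def)
    qed
    then show ?thesis using ev[of "H v"] by (simp add: r_def)
  qed
  moreover have "relu_net_wf (c # ks) ((W, bb) # Ls)"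
    using wf c by (simp add: relu_net_wf_def)
  ultimately show ?thesis unfolding computes_def by blast
qed

lemma delta_sum2: "(\<Sum>t<(n::nat). (if t = x then (c::real) else 0) * R t) = (if x < n then c * R x else 0)"
proof -
  have "(\<Sum>t<n. (if t = x then (c::real) else 0) * R t) = (\<Sum>t<n. (if x = t then c * R t else 0))"
    by (rule sum.cong) auto
  also have "\<dots> = (if x \<in> {..<n} then c * R x else 0)"
    by (subst sum.delta') auto
  finally show ?thesis by simp
qed

lemma divmod_block: "(s::nat) < c \<Longrightarrow> (g * c + s) div c = g \<and> (g * c + s) mod c = s"
  by simp

lemma lt_block: "(g::nat) < G \<Longrightarrow> s < c \<Longrightarrow> g * c + s < G * c"
proof -
  assume "g < G" "s < c"
  then have "Suc g * c \<le> G * c" by (intro mult_le_mono1) simp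
  then show ?thesis using \<open>s < c\<close> by simp
qed

definition relu_pair :: "real \<Rightarrow> real \<Rightarrow> real \<Rightarrow> real" where
  "relu_pair \<sigma> a b = a + \<sigma> * relu (\<sigma> * (b - a))"

definition halve :: "real \<Rightarrow> nat \<Rightarrow> (nat \<Rightarrow> real) \<Rightarrow> nat \<Rightarrow> real" where
  "halve \<sigma> m v i = (let h = (m + 1) div 2; g = i div h; q = i mod h in
     if 2 * q + 1 < m then relu_pair \<sigma> (v (g * m + 2 * q)) (v (g * m + 2 * q + 1))
     else v (g * m + 2 * q))"

definition dl :: "nat \<Rightarrow> nat \<Rightarrow> real" where
  "dl j x = (if j = x then 1 else 0)"

lemma relu_id: "relu a - relu (- a) = a"
  by (simp add: relu_def)

lemma computes_halve:
  assumes comp: "computes ks Ls (G * ((m + 1) div 2)) F"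
    and m: "m \<ge> 2" and G: "G \<ge> 1"
  shows "\<exists>Ls'. computes (G * ((3 * m + 1) div 2) # ks) Ls' (G * m) (\<lambda>v. F (halve \<sigma> m v))"
proof -
  define h where "h = (m + 1) div 2"
  define c0 where "c0 = (3 * m + 1) div 2"
  define A1 where "A1 t j = (let g = t div c0; w = t mod c0; q = w div 3; r = w mod 3;
      ia = g * m + 2 * q in
      if r = 0 then dl j ia else if r = 1 then - dl j ia else \<sigma> * (dl j (ia + 1) - dl j ia))" for t j
  define B where "B i t = (let g = i div h; q = i mod h; base = g * c0 + 3 * q in
      dl t base - dl t (base + 1) + (if 2 * q + 1 < m then \<sigma> * dl t (base + 2) else 0))" for i t
  have c0pos: "G * c0 > 0" using m G unfolding c0_def by simp
  have key: "halve \<sigma> m v i = (\<Sum>t<G * c0. B i t * relu ((\<Sum>j<G * m. A1 t j * v j) + 0)) + 0"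
    if i: "i < G * h" for v i
  proof -
    define g where "g = i div h"
    define q where "q = i mod h"
    define base where "base = g * c0 + 3 * q"
    define R where "R t = relu ((\<Sum>j<G * m. A1 t j * v j) + 0)" for t
    have hpos: "h > 0" using m unfolding h_def by simp
    have gG: "g < G" using i hpos unfolding g_def
      by (simp add: less_mult_imp_div_less mult.commute)
    have qh: "q < h" using hpos unfolding q_def by simp
    have q2m: "2 * q < m" using qh unfolding h_def by linarith
    have pre: "(\<Sum>j<G * m. A1 t j * v j) =
        (if r = 0 then v (g * m + 2 * q) else if r = 1 then - v (g * m + 2 * q)
         else \<sigma> * (v (g * m + 2 * q + 1) - v (g * m + 2 * q)))"
      if t: "t = base + r" and r: "r < 3" and rc: "3 * q + r < c0"
        and rm: "r = 2 \<Longrightarrow> 2 * q + 1 < m" for t r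
    proof -
      have dm: "t div c0 = g" "t mod c0 = 3 * q + r"
        using divmod_block[OF rc, of g] t unfolding base_def by (simp_all add: add.assoc)
      have w: "(3 * q + r) div 3 = q" "(3 * q + r) mod 3 = r" using r by simp_all
      have ia: "g * m + 2 * q < G * m" using lt_block[OF gG q2m] .
      have ib: "r = 2 \<Longrightarrow> g * m + (2 * q + 1) < G * m" using lt_block[OF gG] rm by blast
      have A1t: "A1 t j = (if r = 0 then dl j (g * m + 2 * q) else if r = 1 then - dl j (g * m + 2 * q)
            else \<sigma> * (dl j (g * m + 2 * q + 1) - dl j (g * m + 2 * q)))" for j
        unfolding A1_def Let_def dm w by simp
      show ?thesis
      proof (cases "r = 0")
        case True
        then show ?thesis using ia by (simp add: A1t dl_def delta_sum)
      next
        case False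
        show ?thesis
        proof (cases "r = 1")
          case True
          have "(\<Sum>j<G * m. - dl j (g * m + 2 * q) * v j) = - (\<Sum>j<G * m. dl j (g * m + 2 * q) * v j)"
            by (simp add: sum_negf)
          then show ?thesis using ia True by (simp add: A1t dl_def delta_sum)
        next
          case False2: False
          then have r2: "r = 2" using r \<open>r \<noteq> 0\<close> by simp
          have "(\<Sum>j<G * m. \<sigma> * (dl j (g * m + 2 * q + 1) - dl j (g * m + 2 * q)) * v j)
              = \<sigma> * ((\<Sum>j<G * m. dl j (g * m + 2 * q + 1) * v j) - (\<Sum>j<G * m. dl j (g * m + 2 * q) * v j))"
            by (simp add: sum_distrib_left sum_subtractf algebra_simps)
          then show ?thesis using ia ib[OF r2] r2 \<open>r \<noteq> 0\<close> by (simp add: A1t dl_def delta_sum add.assoc)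
        qed
      qed
    qed
    have Bsum: "(\<Sum>t<G * c0. B i t * R t) = R base - R (base + 1) + (if 2 * q + 1 < m then \<sigma> * R (base + 2) else 0)"
    proof -
      have b1: "base + 1 < G * c0"
      proof -
        have "3 * q + 1 < c0" using q2m qh unfolding c0_def h_def by linarith
        from lt_block[OF gG this] show ?thesis unfolding base_def by (simp add: add.assoc)
      qed
      have b2: "2 * q + 1 < m \<Longrightarrow> base + 2 < G * c0"
      proof -
        assume "2 * q + 1 < m"
        then have "3 * q + 2 < c0" unfolding c0_def by linarith
        from lt_block[OF gG this] show ?thesis unfolding base_def by (simp add: add.assoc)
      qed
      have Bi: "B i t = dl t base - dl t (base + 1) + (if 2 * q + 1 < m then \<sigma> * dl t (base + 2) else 0)" for t
        unfolding B_def Let_def g_def[symmetric] q_def[symmetric] base_def[symmetric] by simp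
      have "(\<Sum>t<G * c0. B i t * R t) = (\<Sum>t<G * c0. (if t = base then 1 else 0) * R t
          - (if t = base + 1 then 1 else 0) * R t
          + (if 2 * q + 1 < m then (if t = base + 2 then \<sigma> else 0) * R t else 0))"
        by (rule sum.cong) (auto simp: Bi dl_def algebra_simps)
      also have "\<dots> = (\<Sum>t<G * c0. (if t = base then 1 else 0) * R t)
          - (\<Sum>t<G * c0. (if t = base + 1 then 1 else 0) * R t)
          + (if 2 * q + 1 < m then (\<Sum>t<G * c0. (if t = base + 2 then \<sigma> else 0) * R t) else 0)"
        by (cases "2 * q + 1 < m") (simp_all only: sum.distrib sum_subtractf if_True if_False sum.neutral_const)
      also have "\<dots> = R base - R (base + 1) + (if 2 * q + 1 < m then \<sigma> * R (base + 2) else 0)"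
        using b1 b2 by (simp add: delta_sum2)
      finally show ?thesis .
    qed
    have R0: "R base = relu (v (g * m + 2 * q))"
      using pre[of base 0] q2m qh unfolding R_def c0_def h_def by simp
    have R1: "R (base + 1) = relu (- v (g * m + 2 * q))"
      using pre[of "base + 1" 1] q2m qh unfolding R_def c0_def h_def by simp
    have R2: "2 * q + 1 < m \<Longrightarrow> R (base + 2) = relu (\<sigma> * (v (g * m + 2 * q + 1) - v (g * m + 2 * q)))"
      using pre[of "base + 2" 2] unfolding R_def c0_def by simp
    have hv: "halve \<sigma> m v i = (if 2 * q + 1 < m then relu_pair \<sigma> (v (g * m + 2 * q)) (v (g * m + 2 * q + 1))
        else v (g * m + 2 * q))"
      unfolding halve_def Let_def h_def[symmetric] g_def[symmetric] q_def[symmetric] by simp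
    show ?thesis
      unfolding R_def[symmetric] Bsum hv using R0 R1 R2 relu_id[of "v (g * m + 2 * q)"]
      by (simp add: relu_pair_def)
  qed
  show ?thesis
    using computes_layer[OF comp[folded h_def], where H="halve \<sigma> m" and c="G * c0" and B=B and Q=A1
        and qq="\<lambda>t. 0" and b="\<lambda>i. 0" and m="G * m"]
      key c0pos unfolding c0_def by blast
qed

function stage :: "real \<Rightarrow> nat \<Rightarrow> (nat \<Rightarrow> real) \<Rightarrow> nat \<Rightarrow> real" where
  "stage \<sigma> m v = (if m \<le> 1 then v else stage \<sigma> ((m + 1) div 2) (halve \<sigma> m v))"
  by pat_completeness auto
termination by (relation "Wellfounded.measure (\<lambda>(\<sigma>, m, v). m)") auto

function stage_ks :: "nat \<Rightarrow> nat \<Rightarrow> nat list" where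
  "stage_ks G m = (if m \<le> 1 then [] else G * ((3 * m + 1) div 2) # stage_ks G ((m + 1) div 2))"
  by pat_completeness auto
termination by (relation "Wellfounded.measure (\<lambda>(G, m). m)") auto

declare stage.simps[simp del] stage_ks.simps[simp del]

lemma computes_stage:
  assumes "G \<ge> 1" "m \<ge> 1" "computes ks Ls G F"
  shows "\<exists>Ls'. computes (stage_ks G m @ ks) Ls' (G * m) (\<lambda>v. F (stage \<sigma> m v))"
  using assms(2)
proof (induction m rule: less_induct)
  case (less m)
  show ?case
  proof (cases "m \<le> 1")
    case True
    then have "m = 1" using less.prems by simp
    then show ?thesis using assms(3) by (simp add: stage.simps stage_ks.simps) blast
  next
    case False
    define h where "h = (m + 1) div 2"
    have "h < m" "h \<ge> 1" using False unfolding h_def by auto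
    from less.IH[OF this] obtain Ls1 where
      c1: "computes (stage_ks G h @ ks) Ls1 (G * h) (\<lambda>v. F (stage \<sigma> h v))" by blast
    from computes_halve[OF c1[unfolded h_def], of \<sigma>] False assms(1)
    obtain Ls2 where "computes (G * ((3 * m + 1) div 2) # stage_ks G ((m + 1) div 2) @ ks) Ls2 (G * m)
        (\<lambda>v. F (stage \<sigma> ((m + 1) div 2) (halve \<sigma> m v)))" by fastforce
    then show ?thesis using False by (simp add: stage.simps[of \<sigma> m] stage_ks.simps[of G m]) blast
  qed
qed

lemma Min_eq_by:
  fixes A B :: "real set"
  assumes "finite A" "finite B" "A \<noteq> {}" "B \<noteq> {}"
    and "\<And>a. a \<in> A \<Longrightarrow> \<exists>b\<in>B. b \<le> a" and "\<And>b. b \<in> B \<Longrightarrow> \<exists>a\<in>A. a \<le> b"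
  shows "Min A = Min B"
proof -
  obtain b where "b \<in> B" "b \<le> Min A" using assms(5)[of "Min A"] Min_in[OF assms(1,3)] by blast
  then have "Min B \<le> Min A" using Min_le[OF assms(2)] by (meson order_trans)
  moreover obtain a where "a \<in> A" "a \<le> Min B" using assms(6)[of "Min B"] Min_in[OF assms(2,4)] by blast
  then have "Min A \<le> Min B" using Min_le[OF assms(1)] by (meson order_trans)
  ultimately show ?thesis by simp
qed

lemma Max_eq_by:
  fixes A B :: "real set"
  assumes "finite A" "finite B" "A \<noteq> {}" "B \<noteq> {}"
    and "\<And>a. a \<in> A \<Longrightarrow> \<exists>b\<in>B. a \<le> b" and "\<And>b. b \<in> B \<Longrightarrow> \<exists>a\<in>A. b \<le> a"
  shows "Max A = Max B"
proof -
  obtain b where "b \<in> B" "Max A \<le> b" using assms(5)[of "Max A"] Max_in[OF assms(1,3)] by blast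
  then have "Max A \<le> Max B" using Max_ge[OF assms(2)] by (meson order_trans)
  moreover obtain a where "a \<in> A" "Max B \<le> a" using assms(6)[of "Max B"] Max_in[OF assms(2,4)] by blast
  then have "Max B \<le> Max A" using Max_ge[OF assms(1)] by (meson order_trans)
  ultimately show ?thesis by simp
qed

lemma relu_pair_min: "relu_pair (-1) a b = min a b"
  by (simp add: relu_pair_def relu_def)

lemma relu_pair_max: "relu_pair 1 a b = max a b"
  by (simp add: relu_pair_def relu_def)

lemma halve_at:
  assumes "q < (m + 1) div 2"
  shows "halve \<sigma> m v (g * ((m + 1) div 2) + q) =
    (if 2 * q + 1 < m then relu_pair \<sigma> (v (g * m + 2 * q)) (v (g * m + 2 * q + 1)) else v (g * m + 2 * q))"
  using assms divmod_block[OF assms, of g] unfolding halve_def Let_def by simp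

lemma stage_min:
  assumes "m \<ge> 1"
  shows "stage (-1) m v g = Min ((\<lambda>i. v (g * m + i)) ` {..<m})"
  using assms
proof (induction m arbitrary: v rule: less_induct)
  case (less m)
  show ?case
  proof (cases "m \<le> 1")
    case True
    then have "m = 1" using less.prems by simp
    then show ?thesis by (simp add: stage.simps lessThan_Suc)
  next
    case False
    define h where "h = (m + 1) div 2"
    have hm: "h < m" "h \<ge> 1" using False unfolding h_def by auto
    have "stage (-1) m v g = stage (-1) h (halve (-1) m v) g"
      using False by (simp add: stage.simps[of _ m] h_def)
    also have "\<dots> = Min ((\<lambda>q. halve (-1) m v (g * h + q)) ` {..<h})"
      using less.IH[OF hm] by simp
    also have "\<dots> = Min ((\<lambda>i. v (g * m + i)) ` {..<m})"
    proof (rule Min_eq_by)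
      fix a assume "a \<in> (\<lambda>q. halve (-1) m v (g * h + q)) ` {..<h}"
      then obtain q where q: "q < h" "a = halve (-1) m v (g * h + q)" by blast
      have q2: "2 * q < m" using q(1) unfolding h_def by linarith
      have "a = v (g * m + 2 * q) \<or> (2 * q + 1 < m \<and> a = v (g * m + 2 * q + 1))"
        using q halve_at[of q m "(-1)" v g] unfolding h_def[symmetric]
        by (auto simp: relu_pair_min min_def)
      then have "a \<in> (\<lambda>i. v (g * m + i)) ` {..<m}"
        using q2 by (auto intro: image_eqI[of _ _ "2 * q"] image_eqI[of _ _ "2 * q + 1"])
      then show "\<exists>b\<in>(\<lambda>i. v (g * m + i)) ` {..<m}. b \<le> a" by blast
    next
      fix b assume "b \<in> (\<lambda>i. v (g * m + i)) ` {..<m}"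
      then obtain i where i: "i < m" "b = v (g * m + i)" by blast
      define q where "q = i div 2"
      have qh: "q < h" using i(1) unfolding h_def q_def by linarith
      have "halve (-1) m v (g * h + q) \<le> b"
      proof (cases "2 * q + 1 < m")
        case True
        then show ?thesis using halve_at[of q m "-1" v g] qh i unfolding h_def[symmetric] q_def
          by (cases "even i") (auto simp: relu_pair_min elim!: evenE oddE)
      next
        case False
        then have "i = 2 * q" using i(1) unfolding q_def by linarith
        then show ?thesis using halve_at[of q m "-1" v g] qh i False unfolding h_def[symmetric] by simp
      qed
      then show "\<exists>a\<in>(\<lambda>q. halve (-1) m v (g * h + q)) ` {..<h}. a \<le> b" using qh by blast
    qed (use hm in \<open>auto simp: lessThan_empty_iff\<close>)
    finally show ?thesis .
  qed
qed

lemma stage_max: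
  assumes "m \<ge> 1"
  shows "stage 1 m v 0 = Max (v ` {..<m})"
  using assms
proof (induction m arbitrary: v rule: less_induct)
  case (less m)
  show ?case
  proof (cases "m \<le> 1")
    case True
    then have "m = 1" using less.prems by simp
    then show ?thesis by (simp add: stage.simps lessThan_Suc)
  next
    case False
    define h where "h = (m + 1) div 2"
    have hm: "h < m" "h \<ge> 1" using False unfolding h_def by auto
    have "stage 1 m v 0 = stage 1 h (halve 1 m v) 0"
      using False by (simp add: stage.simps[of _ m] h_def)
    also have "\<dots> = Max ((\<lambda>q. halve 1 m v (0 * h + q)) ` {..<h})"
      using less.IH[OF hm] by simp
    also have "\<dots> = Max ((\<lambda>i. v (0 * m + i)) ` {..<m})"
    proof (rule Max_eq_by)
      fix a assume "a \<in> (\<lambda>q. halve 1 m v (0 * h + q)) ` {..<h}"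
      then obtain q where q: "q < h" "a = halve 1 m v (0 * h + q)" by blast
      have q2: "2 * q < m" using q(1) unfolding h_def by linarith
      have "a = v (0 * m + 2 * q) \<or> (2 * q + 1 < m \<and> a = v (0 * m + 2 * q + 1))"
        using q halve_at[of q m "1" v 0] unfolding h_def[symmetric]
        by (auto simp: relu_pair_max max_def)
      then have "a \<in> (\<lambda>i. v (0 * m + i)) ` {..<m}"
        using q2 by (auto intro: image_eqI[of _ _ "2 * q"] image_eqI[of _ _ "2 * q + 1"])
      then show "\<exists>b\<in>(\<lambda>i. v (0 * m + i)) ` {..<m}. a \<le> b" by blast
    next
      fix b assume "b \<in> (\<lambda>i. v (0 * m + i)) ` {..<m}"
      then obtain i where i: "i < m" "b = v (0 * m + i)" by blast
      define q where "q = i div 2"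
      have qh: "q < h" using i(1) unfolding h_def q_def by linarith
      have "b \<le> halve 1 m v (0 * h + q)"
      proof (cases "2 * q + 1 < m")
        case True
        then show ?thesis using halve_at[of q m 1 v 0] qh i unfolding h_def[symmetric] q_def
          by (cases "even i") (auto simp: relu_pair_max elim!: evenE oddE)
      next
        case False
        then have "i = 2 * q" using i(1) unfolding q_def by linarith
        then show ?thesis using halve_at[of q m 1 v 0] qh i False unfolding h_def[symmetric] by simp
      qed
      then show "\<exists>a\<in>(\<lambda>q. halve 1 m v (0 * h + q)) ` {..<h}. b \<le> a" using qh by blast
    qed (use hm in \<open>auto simp: lessThan_empty_iff\<close>)
    finally show ?thesis by simp
  qed
qed

lemma stage_ks_map: "stage_ks G m = map ((*) G) (stage_ks 1 m)"
proof (induction m rule: less_induct)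
  case (less m)
  show ?case
  proof (cases "m \<le> 1")
    case True then show ?thesis by (simp add: stage_ks.simps)
  next
    case False
    then have "(m + 1) div 2 < m" by simp
    then show ?thesis using less.IH False by (simp add: stage_ks.simps[of _ m])
  qed
qed

lemma stage_ks_len_pow:
  assumes "m \<ge> 1"
  shows "m \<le> 2 ^ length (stage_ks G m) \<and> 2 ^ length (stage_ks G m) < 2 * m"
  using assms
proof (induction m rule: less_induct)
  case (less m)
  show ?case
  proof (cases "m \<le> 1")
    case True then have "m = 1" using less.prems by simp
    then show ?thesis by (simp add: stage_ks.simps)
  next
    case False
    define h where "h = (m + 1) div 2"
    have hm: "h < m" "h \<ge> 1" using False unfolding h_def by auto
    define s where "s = length (stage_ks G h)"
    have IH: "h \<le> 2 ^ s" "2 ^ s < 2 * h" using less.IH[OF hm] unfolding s_def by auto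
    have len: "length (stage_ks G m) = Suc s" using False by (simp add: stage_ks.simps[of _ m] s_def h_def)
    have "2 ^ s < m"
    proof (cases "even m")
      case True
      then have "2 * h = m" unfolding h_def by presburger
      then show ?thesis using IH by simp
    next
      case odd: False
      then have "2 * h = m + 1" unfolding h_def by presburger
      then have le: "2 ^ s \<le> m" using IH by simp
      have "2 ^ s \<noteq> m"
      proof
        assume eq: "2 ^ s = m"
        show False
        proof (cases s)
          case 0 then show False using eq False by simp
        next
          case (Suc s') then show False using eq odd by (metis dvd_triv_left power_Suc)
        qed
      qed
      then show ?thesis using le by simp
    qed
    moreover have "m \<le> 2 * h" unfolding h_def by simp
    ultimately show ?thesis using IH len by simp
  qed
qed

lemma stage_ks_log:
  assumes "m \<ge> 1"
  shows "\<lceil>log 2 (real m)\<rceil> = int (length (stage_ks G m))"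
proof -
  define s where "s = length (stage_ks G m)"
  have b: "m \<le> 2 ^ s" "2 ^ s < 2 * m" using stage_ks_len_pow[OF assms] unfolding s_def by auto
  have m0: "real m > 0" using assms by simp
  have "log 2 (real m) \<le> real s"
  proof -
    have "real m \<le> real (2 ^ s)" using b(1) by (simp only: of_nat_le_iff)
    then have "real m \<le> 2 powr real s" by (simp add: powr_realpow)
    then show ?thesis using m0 by (simp add: log_le_iff)
  qed
  moreover have "real s < log 2 (2 * real m)"
  proof -
    have "real (2 ^ s) < real (2 * m)" using b(2) by (simp only: of_nat_less_iff)
    then have "2 powr real s < 2 * real m" by (simp add: powr_realpow)
    then show ?thesis using m0 by (simp add: less_log_iff)
  qed
  then have "real s - 1 < log 2 (real m)" using m0 by (simp add: log_mult)
  ultimately show ?thesis unfolding s_def[symmetric] by (intro ceiling_unique) simp_all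
qed

lemma stage_ks_width:
  assumes "w \<in> set (stage_ks G m)"
  shows "w \<le> G * ((3 * m + 1) div 2) \<and> (G \<ge> 1 \<longrightarrow> w > 0)"
  using assms
proof (induction m rule: less_induct)
  case (less m)
  show ?case
  proof (cases "m \<le> 1")
    case True then show ?thesis using less.prems by (simp add: stage_ks.simps)
  next
    case False
    define h where "h = (m + 1) div 2"
    have hm: "h < m" using False unfolding h_def by auto
    have "w = G * ((3 * m + 1) div 2) \<or> w \<in> set (stage_ks G h)"
      using less.prems False by (simp add: stage_ks.simps[of _ m] h_def)
    then show ?thesis
    proof
      assume "w \<in> set (stage_ks G h)"
      with less.IH[OF hm] have "w \<le> G * ((3 * h + 1) div 2) \<and> (G \<ge> 1 \<longrightarrow> w > 0)" by blast
      moreover have "G * ((3 * h + 1) div 2) \<le> G * ((3 * m + 1) div 2)"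
        using hm by (intro mult_le_mono2 div_le_mono) simp
      ultimately show ?thesis by linarith
    qed (use False in simp)
  qed
qed

lemma stage_ks_sum:
  assumes "m \<ge> 1"
  shows "2 * sum_list (stage_ks 1 m) + 6 \<le> 6 * 2 ^ length (stage_ks 1 m) + length (stage_ks 1 m)"
  using assms
proof (induction m rule: less_induct)
  case (less m)
  show ?case
  proof (cases "m \<le> 1")
    case True then show ?thesis by (simp add: stage_ks.simps)
  next
    case False
    define h where "h = (m + 1) div 2"
    have hm: "h < m" "h \<ge> 1" using False unfolding h_def by auto
    define s where "s = length (stage_ks 1 h)"
    have IH: "2 * sum_list (stage_ks 1 h) + 6 \<le> 6 * 2 ^ s + s" using less.IH[OF hm] unfolding s_def by simp
    have "h \<le> 2 ^ s" using stage_ks_len_pow[OF hm(2), of 1] unfolding s_def by simp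
    moreover have "m \<le> 2 * h" unfolding h_def by simp
    ultimately have "m \<le> 2 * 2 ^ s" by simp
    then have "2 * ((3 * m + 1) div 2) \<le> 6 * 2 ^ s + 1" by linarith
    then show ?thesis using IH False by (simp add: stage_ks.simps[of _ m] s_def h_def)
  qed
qed

lemma stage_ks_len_le: "length (stage_ks G m) \<le> m - 1"
proof (induction m rule: less_induct)
  case (less m)
  show ?case
  proof (cases "m \<le> 1")
    case True then show ?thesis by (simp add: stage_ks.simps)
  next
    case False
    define h where "h = (m + 1) div 2"
    have hm: "h < m" using False unfolding h_def by auto
    then show ?thesis using less.IH[OF hm] False by (simp add: stage_ks.simps[of _ m] h_def)
  qed
qed

lemma network_from_maxmin:
  fixes a :: "nat \<Rightarrow> real^'n" and b :: "nat \<Rightarrow> real" and p :: "real^'n \<Rightarrow> real"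
  assumes k: "k \<ge> 1" and M: "M \<ge> 1"
    and rep: "\<And>x. p x = Max ((\<lambda>g. Min ((\<lambda>i. a (idx g i) \<bullet> x + b (idx g i)) ` {..<k})) ` {..<M})"
  shows "\<exists>W1 b1 Ls. relu_net_wf (stage_ks M k @ stage_ks 1 M) Ls \<and>
     (\<forall>x. p x = relu_net_eval (stage_ks M k @ stage_ks 1 M) W1 b1 Ls x)"
proof -
  have c0: "computes [] [] 1 (\<lambda>v. v 0)" by (rule computes_base) simp
  from computes_stage[of 1 M "[]" "[]" "\<lambda>v. v 0" 1] c0 M
  obtain Ls1 where c1: "computes (stage_ks 1 M) Ls1 M (\<lambda>v. stage 1 M v 0)" by auto
  from computes_stage[OF M k c1, of "-1"]
  obtain Ls2 where c2: "computes (stage_ks M k @ stage_ks 1 M) Ls2 (M * k)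
      (\<lambda>v. stage 1 M (stage (-1) k v) 0)" by auto
  then obtain A a0 where wf: "relu_net_wf (stage_ks M k @ stage_ks 1 M) Ls2"
    and ev: "\<And>v. eval_layers (stage_ks M k @ stage_ks 1 M) Ls2 (\<lambda>j. (\<Sum>i<M * k. A j i * v i) + a0 j) 0
       = stage 1 M (stage (-1) k v) 0"
    unfolding computes_def by blast
  define aa where "aa i = a (idx (i div k) (i mod k))" for i
  define bb where "bb i = b (idx (i div k) (i mod k))" for i
  define W1 where "W1 j = (\<Sum>i<M * k. A j i *\<^sub>R aa i)" for j
  define b1 where "b1 j = (\<Sum>i<M * k. A j i * bb i) + a0 j" for j
  have "p x = relu_net_eval (stage_ks M k @ stage_ks 1 M) W1 b1 Ls2 x" for x
  proof -
    define v where "v i = aa i \<bullet> x + bb i" for i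
    have "(\<lambda>j. W1 j \<bullet> x + b1 j) = (\<lambda>j. (\<Sum>i<M * k. A j i * v i) + a0 j)"
      by (auto simp: W1_def b1_def v_def inner_sum_left distrib_left sum.distrib)
    then have "relu_net_eval (stage_ks M k @ stage_ks 1 M) W1 b1 Ls2 x = stage 1 M (stage (-1) k v) 0"
      unfolding relu_net_eval_def using ev by simp
    also have "\<dots> = Max ((\<lambda>g. stage (-1) k v g) ` {..<M})"
      using stage_max[OF M] by simp
    also have "\<dots> = Max ((\<lambda>g. Min ((\<lambda>i. v (g * k + i)) ` {..<k})) ` {..<M})"
      using stage_min[OF k] by simp
    also have "\<dots> = p x"
    proof -
      have "(\<lambda>i. v (g * k + i)) ` {..<k} = (\<lambda>i. a (idx g i) \<bullet> x + b (idx g i)) ` {..<k}" for g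
        by (rule image_cong) (auto simp: v_def aa_def bb_def)
      then show ?thesis using rep by simp
    qed
    finally show ?thesis by simp
  qed
  then show ?thesis using wf by blast
qed


lemma affine_agree_open:
  fixes a c :: "real^'n"
  assumes "open Q" "x0 \<in> Q" "\<And>x. x \<in> Q \<Longrightarrow> a \<bullet> x + b = c \<bullet> x + d"
  shows "a = c \<and> b = d"
proof -
  obtain r where r: "r > 0" "ball x0 r \<subseteq> Q" using assms(1,2) open_contains_ball by blast
  have ac: "a = c"
  proof (rule ccontr)
    assume ne: "a \<noteq> c"
    define w where "w = a - c"
    have nw: "norm w > 0" using ne unfolding w_def by simp
    define x1 where "x1 = x0 + (r / (2 * norm w)) *\<^sub>R w"
    have "dist x0 x1 = r / 2" using nw r unfolding x1_def dist_norm by simp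
    then have "x1 \<in> Q" using r by auto
    then have e1: "w \<bullet> x1 = d - b" using assms(3)[of x1] unfolding w_def by (simp add: inner_diff_left)
    have e0: "w \<bullet> x0 = d - b" using assms(3)[of x0] assms(2) unfolding w_def by (simp add: inner_diff_left)
    have "w \<bullet> x1 = w \<bullet> x0 + (r / (2 * norm w)) * (w \<bullet> w)"
      unfolding x1_def by (simp add: inner_add_right)
    also have "w \<bullet> w = norm w * norm w" by (simp add: power2_norm_eq_inner[symmetric] power2_eq_square)
    finally have "w \<bullet> x1 = w \<bullet> x0 + r * norm w / 2" using nw by (simp add: field_simps)
    then show False using e0 e1 r nw by simp
  qed
  then show ?thesis using assms(3)[OF assms(2)] by simp
qed

lemma finite_closed_cover_interior:
  fixes F :: "'i \<Rightarrow> 'a::topological_space set"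
  assumes "finite I" "\<And>j. j \<in> I \<Longrightarrow> closed (F j)" "open Q" "Q \<noteq> {}" "Q \<subseteq> (\<Union>j\<in>I. F j)"
  shows "\<exists>j\<in>I. \<exists>V. open V \<and> V \<noteq> {} \<and> V \<subseteq> F j \<inter> Q"
  using assms
proof (induction I arbitrary: Q rule: finite_induct)
  case empty then show ?case by simp
next
  case (insert j I)
  show ?case
  proof (cases "Q - F j = {}")
    case True
    then show ?thesis using insert.prems by blast
  next
    case False
    have "open (Q - F j)" using insert.prems by (intro open_Diff) auto
    moreover have "Q - F j \<subseteq> (\<Union>j\<in>I. F j)" using insert.prems by auto
    ultimately obtain j' V where "j' \<in> I" "open V" "V \<noteq> {}" "V \<subseteq> F j' \<inter> (Q - F j)"
      using insert.IH[of "Q - F j"] insert.prems False by blast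
    then show ?thesis by blast
  qed
qed

lemma segment_core:
  fixes \<psi> :: "real \<Rightarrow> real" and \<alpha> \<beta> :: "nat \<Rightarrow> real"
  assumes cont: "\<And>t. isCont \<psi> t"
    and pieces: "\<And>t. \<exists>j<k. \<psi> t = \<alpha> j + t * \<beta> j"
  shows "\<exists>j<k. \<alpha> j \<ge> \<psi> 0 \<and> \<alpha> j + \<beta> j \<le> \<psi> 1"
proof -
  define \<phi> where "\<phi> j t = \<alpha> j + t * \<beta> j" for j t
  define P where "P u v \<longleftrightarrow> (\<exists>j<k. \<phi> j u \<ge> \<psi> u \<and> \<phi> j v \<le> \<psi> v)" for u v
  have trans: "P u v" if uw: "u \<le> w" and wv: "w \<le> v" and P1: "P u w" and P2: "P w v" for u w v
  proof -
    obtain j1 where j1: "j1 < k" "\<phi> j1 u \<ge> \<psi> u" "\<phi> j1 w \<le> \<psi> w" using P1 unfolding P_def by blast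
    obtain j2 where j2: "j2 < k" "\<phi> j2 w \<ge> \<psi> w" "\<phi> j2 v \<le> \<psi> v" using P2 unfolding P_def by blast
    show ?thesis
    proof (cases "\<phi> j2 u \<ge> \<psi> u")
      case True then show ?thesis using j2 unfolding P_def by blast
    next
      case False
      define D where "D t = \<phi> j2 t - \<phi> j1 t" for t
      have D: "D t = (\<alpha> j2 - \<alpha> j1) + t * (\<beta> j2 - \<beta> j1)" for t
        unfolding D_def \<phi>_def by (simp add: algebra_simps)
      have Du: "D u < 0" using False j1 unfolding D_def by simp
      have Dw: "D w \<ge> 0" using j1 j2 unfolding D_def by simp
      have "(w - u) * (\<beta> j2 - \<beta> j1) > 0" using Du Dw D[of u] D[of w] by (simp add: algebra_simps)
      then have "\<beta> j2 - \<beta> j1 > 0" using uw by (simp add: zero_less_mult_iff)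
      then have "(v - w) * (\<beta> j2 - \<beta> j1) \<ge> 0" using wv by simp
      then have "D v \<ge> D w" using D[of v] D[of w] by (simp add: algebra_simps)
      then have "\<phi> j1 v \<le> \<psi> v" using Dw j2 unfolding D_def by simp
      then show ?thesis using j1 unfolding P_def by blast
    qed
  qed
  have local: "\<exists>d>0. \<forall>s. dist s t < d \<longrightarrow> (\<exists>j<k. \<phi> j t = \<psi> t \<and> \<phi> j s = \<psi> s)" for t
  proof -
    define J where "J = {j. j < k \<and> \<phi> j t \<noteq> \<psi> t}"
    have fin: "finite J" unfolding J_def by simp
    have "\<forall>j\<in>J. eventually (\<lambda>s. \<phi> j s \<noteq> \<psi> s) (at t)"
    proof
      fix j assume "j \<in> J"
      have "isCont (\<lambda>s. \<phi> j s - \<psi> s) t" unfolding \<phi>_def using cont by (intro continuous_intros)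
      then have "((\<lambda>s. \<phi> j s - \<psi> s) \<longlongrightarrow> \<phi> j t - \<psi> t) (at t)"
        by (simp add: isCont_def)
      moreover have "\<phi> j t - \<psi> t \<noteq> 0" using \<open>j \<in> J\<close> unfolding J_def by simp
      ultimately have "eventually (\<lambda>s. \<phi> j s - \<psi> s \<noteq> 0) (at t)"
        by (rule tendsto_imp_eventually_ne)
      then show "eventually (\<lambda>s. \<phi> j s \<noteq> \<psi> s) (at t)" by (simp add: eventually_mono)
    qed
    then have "eventually (\<lambda>s. \<forall>j\<in>J. \<phi> j s \<noteq> \<psi> s) (at t)"
      by (rule eventually_ball_finite[OF fin])
    then obtain d where d: "d > 0" "\<And>s. s \<noteq> t \<Longrightarrow> dist s t < d \<Longrightarrow> \<forall>j\<in>J. \<phi> j s \<noteq> \<psi> s"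
      unfolding eventually_at by blast
    show ?thesis
    proof (intro exI[of _ d] conjI allI impI)
      fix s assume "dist s t < d"
      obtain j where j: "j < k" "\<psi> s = \<phi> j s" using pieces[of s] unfolding \<phi>_def by blast
      then have "j \<notin> J" using d(2)[OF _ \<open>dist s t < d\<close>] unfolding J_def by (cases "s = t") auto
      then show "\<exists>j<k. \<phi> j t = \<psi> t \<and> \<phi> j s = \<psi> s" using j unfolding J_def by auto
    qed (use d in auto)
  qed
  define S where "S = {s. 0 \<le> s \<and> s \<le> 1 \<and> P 0 s}"
  have P00: "P 0 0"
  proof -
    obtain j where "j < k" "\<psi> 0 = \<phi> j 0" using pieces[of 0] unfolding \<phi>_def by blast
    then show ?thesis unfolding P_def by force
  qed
  then have S0: "0 \<in> S" unfolding S_def by simp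
  have bdd: "bdd_above S" unfolding S_def by (auto intro: bdd_aboveI[of _ 1])
  define s where "s = Sup S"
  have s0: "0 \<le> s" using cSup_upper[OF S0 bdd] unfolding s_def .
  have Sne: "S \<noteq> {}" using S0 by blast
  have Sle: "\<And>x. x \<in> S \<Longrightarrow> x \<le> 1" by (simp add: S_def)
  have s1: "s \<le> 1" unfolding s_def using cSup_least[OF Sne Sle] by blast
  obtain d where d: "d > 0" "\<And>r. dist r s < d \<Longrightarrow> (\<exists>j<k. \<phi> j s = \<psi> s \<and> \<phi> j r = \<psi> r)"
    using local[of s] by blast
  have "s - d < Sup S" using d(1) unfolding s_def by simp
  then obtain r where r: "r \<in> S" "s - d < r" by (rule less_cSupE[OF _ Sne])
  have rs: "r \<le> s" using cSup_upper[OF r(1) bdd] unfolding s_def .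
  have "P r s"
  proof -
    have "dist r s < d" using r(2) rs by (simp add: dist_real_def)
    then obtain j where "j < k" "\<phi> j s = \<psi> s" "\<phi> j r = \<psi> r" using d(2)[of r] by blast
    then show ?thesis unfolding P_def by force
  qed
  moreover have "P 0 r" "0 \<le> r" using r(1) unfolding S_def by auto
  ultimately have P0s: "P 0 s" using trans[of 0 r s] rs by blast
  have "s = 1"
  proof (rule ccontr)
    assume "s \<noteq> 1"
    then have sl: "s < 1" using s1 by simp
    define s' where "s' = min 1 (s + d / 2)"
    have ss': "s < s'" "s' \<le> 1" using sl d(1) unfolding s'_def by auto
    have "dist s' s < d" using ss' d(1) unfolding s'_def dist_real_def by auto
    then obtain j where "j < k" "\<phi> j s = \<psi> s" "\<phi> j s' = \<psi> s'" using d(2) by blast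
    then have "P s s'" unfolding P_def by force
    then have "P 0 s'" using trans[of 0 s s'] P0s s0 ss' by simp
    then have "s' \<in> S" using s0 ss' unfolding S_def by simp
    then have "s' \<le> s" using cSup_upper[OF _ bdd] unfolding s_def by blast
    then show False using ss' by simp
  qed
  then have "P 0 1" using P0s by simp
  then show ?thesis unfolding P_def \<phi>_def by simp
qed

lemma segment_lemma:
  fixes p :: "real^'n \<Rightarrow> real" and a :: "nat \<Rightarrow> real^'n" and b :: "nat \<Rightarrow> real"
  assumes cont: "continuous_on UNIV p"
    and pieces: "\<And>x. \<exists>j<k. p x = a j \<bullet> x + b j"
  shows "\<exists>j<k. a j \<bullet> y + b j \<ge> p y \<and> a j \<bullet> x + b j \<le> p x"
proof -
  define \<psi> where "\<psi> t = p (y + t *\<^sub>R (x - y))" for t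
  have c: "isCont \<psi> t" for t
  proof -
    have "isCont (\<lambda>t. y + t *\<^sub>R (x - y)) t" by (intro continuous_intros)
    moreover have "isCont p (y + t *\<^sub>R (x - y))"
      using cont by (simp add: continuous_on_eq_continuous_at)
    ultimately show ?thesis unfolding \<psi>_def by (rule isCont_o2)
  qed
  have pc: "\<exists>j<k. \<psi> t = (a j \<bullet> y + b j) + t * (a j \<bullet> (x - y))" for t
  proof -
    obtain j where "j < k" "p (y + t *\<^sub>R (x - y)) = a j \<bullet> (y + t *\<^sub>R (x - y)) + b j" using pieces by blast
    then show ?thesis unfolding \<psi>_def by (intro exI[of _ j]) (simp add: inner_add_right algebra_simps)
  qed
  from segment_core[OF c pc] obtain j where "j < k" "a j \<bullet> y + b j \<ge> \<psi> 0"
    "a j \<bullet> y + b j + a j \<bullet> (x - y) \<le> \<psi> 1" by blast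
  then show ?thesis unfolding \<psi>_def by (intro exI[of _ j]) (simp add: inner_diff_right)
qed


definition shatters :: "'a set set \<Rightarrow> 'a set \<Rightarrow> bool" where
  "shatters \<F> A \<longleftrightarrow> (\<forall>B\<subseteq>A. \<exists>F\<in>\<F>. F \<inter> A = B)"

lemma shatters_subset: "shatters \<F> A \<Longrightarrow> A' \<subseteq> A \<Longrightarrow> shatters \<F> A'"
  unfolding shatters_def
proof (intro allI impI)
  fix B assume sh: "\<forall>B\<subseteq>A. \<exists>F\<in>\<F>. F \<inter> A = B" and A': "A' \<subseteq> A" and B: "B \<subseteq> A'"
  then obtain F where "F \<in> \<F>" "F \<inter> A = B" by blast
  then have "F \<inter> A' = B" using A' B by blast
  then show "\<exists>F\<in>\<F>. F \<inter> A' = B" using \<open>F \<in> \<F>\<close> by blast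
qed

lemma pajor:
  assumes "finite X" "\<F> \<subseteq> Pow X"
  shows "card \<F> \<le> card {A. A \<subseteq> X \<and> shatters \<F> A}"
  using assms
proof (induction X arbitrary: \<F> rule: finite_induct)
  case empty
  then have "\<F> \<subseteq> {{}}" by auto
  show ?case
  proof (cases "\<F> = {}")
    case True then show ?thesis by simp
  next
    case False
    then have "\<F> = {{}}" using \<open>\<F> \<subseteq> {{}}\<close> by blast
    then have "{A. A \<subseteq> {} \<and> shatters \<F> A} = {{}}" unfolding shatters_def by auto
    then show ?thesis using \<open>\<F> = {{}}\<close> by simp
  qed
next
  case (insert x X)
  define Fa where "Fa = {F\<in>\<F>. x \<notin> F}"
  define Fb where "Fb = {F\<in>\<F>. x \<in> F}"
  define F1 where "F1 = (\<lambda>F. F - {x}) ` \<F>"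
  define F2 where "F2 = {F. F \<in> \<F> \<and> x \<notin> F \<and> insert x F \<in> \<F>}"
  have finF: "finite \<F>" using insert.prems insert.hyps(1)
    by (meson finite_Pow_iff finite_insert rev_finite_subset)
  have F1sub: "F1 \<subseteq> Pow X" using insert.prems unfolding F1_def by auto
  have F2sub: "F2 \<subseteq> Pow X" using insert.prems unfolding F2_def by auto
  have IH1: "card F1 \<le> card {A. A \<subseteq> X \<and> shatters F1 A}" using insert.IH[OF F1sub] .
  have IH2: "card F2 \<le> card {A. A \<subseteq> X \<and> shatters F2 A}" using insert.IH[OF F2sub] .
  have Fsplit: "\<F> = Fa \<union> Fb" "Fa \<inter> Fb = {}" unfolding Fa_def Fb_def by auto
  have Fb': "(\<lambda>F. F - {x}) ` Fb = {F. x \<notin> F \<and> insert x F \<in> \<F>}"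
  proof
    show "(\<lambda>F. F - {x}) ` Fb \<subseteq> {F. x \<notin> F \<and> insert x F \<in> \<F>}"
      unfolding Fb_def by (auto simp: insert_absorb)
    show "{F. x \<notin> F \<and> insert x F \<in> \<F>} \<subseteq> (\<lambda>F. F - {x}) ` Fb"
    proof
      fix F assume "F \<in> {F. x \<notin> F \<and> insert x F \<in> \<F>}"
      then have "insert x F \<in> Fb" "F = insert x F - {x}" unfolding Fb_def by auto
      then show "F \<in> (\<lambda>F. F - {x}) ` Fb" by blast
    qed
  qed
  have injb: "inj_on (\<lambda>F. F - {x}) Fb"
    unfolding Fb_def inj_on_def by (metis (mono_tags, lifting) insert_Diff mem_Collect_eq)
  have F1eq: "F1 = Fa \<union> (\<lambda>F. F - {x}) ` Fb"
  proof (rule set_eqI)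
    fix G
    show "G \<in> F1 \<longleftrightarrow> G \<in> Fa \<union> (\<lambda>F. F - {x}) ` Fb"
    proof
      assume "G \<in> F1"
      then obtain F where F: "F \<in> \<F>" "G = F - {x}" unfolding F1_def by blast
      show "G \<in> Fa \<union> (\<lambda>F. F - {x}) ` Fb"
      proof (cases "x \<in> F")
        case True then have "F \<in> Fb" using F unfolding Fb_def by simp
        then show ?thesis using F by blast
      next
        case False then have "G = F" "F \<in> Fa" using F unfolding Fa_def by auto
        then show ?thesis by blast
      qed
    next
      assume "G \<in> Fa \<union> (\<lambda>F. F - {x}) ` Fb"
      then show "G \<in> F1" unfolding F1_def Fa_def Fb_def by (auto intro: image_eqI[of _ _ G])
    qed
  qed
  have F2eq: "F2 = Fa \<inter> (\<lambda>F. F - {x}) ` Fb" unfolding F2_def Fa_def Fb' by auto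
  have finab: "finite Fa" "finite Fb" using finF unfolding Fa_def Fb_def by auto
  have "card F1 + card F2 = card Fa + card ((\<lambda>F. F - {x}) ` Fb)"
    unfolding F1eq F2eq by (rule card_Un_Int[symmetric]) (use finab in auto)
  also have "\<dots> = card Fa + card Fb" using card_image[OF injb] by simp
  also have "\<dots> = card \<F>" using Fsplit finab card_Un_disjoint by metis
  finally have cardF: "card \<F> = card F1 + card F2" by simp
  define S1 where "S1 = {A. A \<subseteq> X \<and> shatters F1 A}"
  define S2 where "S2 = {A. A \<subseteq> X \<and> shatters F2 A}"
  have sub1: "S1 \<subseteq> {A. A \<subseteq> insert x X \<and> shatters \<F> A}"
  proof
    fix A assume "A \<in> S1"
    then have A: "A \<subseteq> X" "shatters F1 A" unfolding S1_def by auto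
    have "x \<notin> A" using A(1) insert.hyps(2) by blast
    have "shatters \<F> A" unfolding shatters_def
    proof (intro allI impI)
      fix B assume "B \<subseteq> A"
      then obtain F where "F \<in> F1" "F \<inter> A = B" using A(2) unfolding shatters_def by blast
      then obtain G where "G \<in> \<F>" "F = G - {x}" unfolding F1_def by blast
      then have "G \<inter> A = B" using \<open>F \<inter> A = B\<close> \<open>x \<notin> A\<close> by blast
      then show "\<exists>F\<in>\<F>. F \<inter> A = B" using \<open>G \<in> \<F>\<close> by blast
    qed
    then show "A \<in> {A. A \<subseteq> insert x X \<and> shatters \<F> A}" using A by auto
  qed
  have sub2: "insert x ` S2 \<subseteq> {A. A \<subseteq> insert x X \<and> shatters \<F> A}"
  proof
    fix A' assume "A' \<in> insert x ` S2"
    then obtain A where A: "A \<subseteq> X" "shatters F2 A" "A' = insert x A" unfolding S2_def by auto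
    have "x \<notin> A" using A(1) insert.hyps(2) by blast
    have "shatters \<F> (insert x A)" unfolding shatters_def
    proof (intro allI impI)
      fix B assume B: "B \<subseteq> insert x A"
      then have "B - {x} \<subseteq> A" by blast
      then obtain F where F: "F \<in> F2" "F \<inter> A = B - {x}" using A(2) unfolding shatters_def by blast
      then have F': "F \<in> \<F>" "x \<notin> F" "insert x F \<in> \<F>" unfolding F2_def by auto
      show "\<exists>F\<in>\<F>. F \<inter> insert x A = B"
      proof (cases "x \<in> B")
        case True
        have "insert x F \<inter> insert x A = B" using True F(2) B by blast
        then show ?thesis using F' by blast
      next
        case False
        have "F \<inter> insert x A = B" using False F(2) F'(2) B by blast
        then show ?thesis using F' by blast
      qed
    qed
    then show "A' \<in> {A. A \<subseteq> insert x X \<and> shatters \<F> A}" using A by auto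
  qed
  have disj: "S1 \<inter> insert x ` S2 = {}" using insert.hyps(2) unfolding S1_def by auto
  have inj2: "inj_on (insert x) S2"
    unfolding inj_on_def S2_def using insert.hyps(2) by (metis Diff_insert_absorb mem_Collect_eq subsetD)
  have finS: "finite S1" "finite S2" using insert.hyps(1) unfolding S1_def S2_def by auto
  have finT: "finite {A. A \<subseteq> insert x X \<and> shatters \<F> A}" using insert.hyps(1) by auto
  have "card F1 + card F2 \<le> card S1 + card S2" using IH1 IH2 unfolding S1_def S2_def by simp
  also have "\<dots> = card (S1 \<union> insert x ` S2)"
    using card_Un_disjoint[OF finS(1) _ disj] finS(2) card_image[OF inj2] by simp
  also have "\<dots> \<le> card {A. A \<subseteq> insert x X \<and> shatters \<F> A}"
    by (rule card_mono[OF finT]) (use sub1 sub2 in blast)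
  finally show ?case using cardF by simp
qed

lemma card_small_subsets:
  assumes "finite P"
  shows "card {A. A \<subseteq> P \<and> card A \<le> n} = (\<Sum>i\<le>n. card P choose i)"
proof -
  have eq: "{A. A \<subseteq> P \<and> card A \<le> n} = (\<Union>i\<in>{..n}. {A. A \<subseteq> P \<and> card A = i})" by auto
  have "card (\<Union>i\<in>{..n}. {A. A \<subseteq> P \<and> card A = i}) = (\<Sum>i\<le>n. card {A. A \<subseteq> P \<and> card A = i})"
    by (rule card_UN_disjoint) (use assms in auto)
  also have "\<dots> = (\<Sum>i\<le>n. card P choose i)" using n_subsets[OF assms] by simp
  finally show ?thesis using eq by simp
qed

lemma sauer_shelah:
  assumes "finite X" "\<F> \<subseteq> Pow X" "\<And>A. A \<subseteq> X \<Longrightarrow> shatters \<F> A \<Longrightarrow> card A \<le> n"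
  shows "card \<F> \<le> (\<Sum>i\<le>n. card X choose i)"
proof -
  have "card \<F> \<le> card {A. A \<subseteq> X \<and> shatters \<F> A}" by (rule pajor[OF assms(1,2)])
  also have "\<dots> \<le> card {A. A \<subseteq> X \<and> card A \<le> n}"
    by (rule card_mono) (use assms in auto)
  also have "\<dots> = (\<Sum>i\<le>n. card X choose i)" by (rule card_small_subsets[OF assms(1)])
  finally show ?thesis .
qed

definition pairs :: "nat \<Rightarrow> (nat \<times> nat) set" where
  "pairs k = {(i, j). i < j \<and> j < k}"

lemma pairs_finite: "finite (pairs k)"
  by (rule finite_subset[of _ "{..<k} \<times> {..<k}"]) (auto simp: pairs_def)

lemma pairs_card: "2 * card (pairs k) + k = k * k"
proof (induction k)
  case 0 then show ?case by (simp add: pairs_def)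
next
  case (Suc k)
  have eq: "pairs (Suc k) = pairs k \<union> (\<lambda>i. (i, k)) ` {..<k}" unfolding pairs_def by auto
  have "card (pairs (Suc k)) = card (pairs k) + card ((\<lambda>i. (i, k)) ` {..<k})"
    unfolding eq by (rule card_Un_disjoint) (simp_all add: pairs_finite, auto simp: pairs_def)
  also have "card ((\<lambda>i. (i, k)) ` {..<k}) = k" by (subst card_image) (auto simp: inj_on_def)
  finally show ?case using Suc by simp
qed

lemma pairs_card': "card (pairs k) = (k ^ 2 - k) div 2"
  using pairs_card[of k] by (simp add: power2_eq_square)


definition aff :: "(nat \<Rightarrow> real^'n) \<Rightarrow> (nat \<Rightarrow> real) \<Rightarrow> nat \<Rightarrow> real^'n \<Rightarrow> real" where
  "aff a b j x = a j \<bullet> x + b j"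

lemma continuous_aff: "continuous_on UNIV (aff a b j)"
  unfolding aff_def by (intro continuous_intros)

context
  fixes p :: "real^'n \<Rightarrow> real" and a :: "nat \<Rightarrow> real^'n" and b :: "nat \<Rightarrow> real" and k :: nat
  assumes cont: "continuous_on UNIV p"
    and pieces: "\<And>x. \<exists>j<k. p x = aff a b j x"
    and dstn: "\<And>i j. i < k \<Longrightarrow> j < k \<Longrightarrow> i \<noteq> j \<Longrightarrow> (a i, b i) \<noteq> (a j, b j)"
begin

definition Gen :: "(real^'n) set" where
  "Gen = {x. \<forall>i<k. \<forall>j<k. i \<noteq> j \<longrightarrow> aff a b i x \<noteq> aff a b j x}"

definition ordr :: "real^'n \<Rightarrow> (nat \<times> nat) set" where
  "ordr x = {(i, j). i < k \<and> j < k \<and> aff a b i x < aff a b j x}"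

definition Tset :: "real^'n \<Rightarrow> nat set" where
  "Tset x = {j. j < k \<and> p x \<le> aff a b j x}"

lemma gen_dense:
  assumes "open U" "U \<noteq> {}"
  shows "U \<inter> Gen \<noteq> {}"
proof
  assume empty: "U \<inter> Gen = {}"
  define I where "I = {(i, j). i < k \<and> j < k \<and> i \<noteq> j}"
  define Z where "Z ij = {x. aff a b (fst ij) x = aff a b (snd ij) x}" for ij
  have finI: "finite I" by (rule finite_subset[of _ "{..<k} \<times> {..<k}"]) (auto simp: I_def)
  have clZ: "closed (Z ij)" for ij
    unfolding Z_def aff_def by (intro closed_Collect_eq continuous_intros)
  have "U \<subseteq> (\<Union>ij\<in>I. Z ij)"
  proof
    fix x assume "x \<in> U"
    then have "x \<notin> Gen" using empty by blast
    then obtain i j where "i < k" "j < k" "i \<noteq> j" "aff a b i x = aff a b j x" unfolding Gen_def by blast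
    then show "x \<in> (\<Union>ij\<in>I. Z ij)" unfolding I_def Z_def by force
  qed
  from finite_closed_cover_interior[OF finI clZ assms this]
  obtain ij V where ij: "ij \<in> I" "open V" "V \<noteq> {}" "V \<subseteq> Z ij \<inter> U" by blast
  then obtain x0 where "x0 \<in> V" by blast
  have "a (fst ij) = a (snd ij) \<and> b (fst ij) = b (snd ij)"
    by (rule affine_agree_open[OF ij(2) \<open>x0 \<in> V\<close>]) (use ij(4) in \<open>auto simp: Z_def aff_def\<close>)
  then show False using dstn ij(1) unfolding I_def by auto
qed

lemma Tset_sub: "Tset x \<subseteq> {..<k}"
  unfolding Tset_def by auto

lemma Tset_ne: "Tset x \<noteq> {}"
proof -
  obtain j where "j < k" "p x = aff a b j x" using pieces by blast
  then show ?thesis unfolding Tset_def by auto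
qed

lemma Tset_alt:
  assumes "\<alpha> < k" "p y = aff a b \<alpha> y" "ordr y = ordr y'"
  shows "Tset y = {j. j < k \<and> aff a b \<alpha> y' \<le> aff a b j y'}"
proof -
  have "j < k \<Longrightarrow> (p y \<le> aff a b j y \<longleftrightarrow> aff a b \<alpha> y' \<le> aff a b j y')" for j
  proof -
    assume j: "j < k"
    have "p y \<le> aff a b j y \<longleftrightarrow> (j, \<alpha>) \<notin> ordr y" using assms(1,2) j unfolding ordr_def by auto
    also have "\<dots> \<longleftrightarrow> (j, \<alpha>) \<notin> ordr y'" using assms(3) by simp
    also have "\<dots> \<longleftrightarrow> aff a b \<alpha> y' \<le> aff a b j y'" using assms(1) j unfolding ordr_def by auto
    finally show ?thesis .
  qed
  then show ?thesis unfolding Tset_def by auto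
qed

lemma Tset_compare:
  assumes "ordr y = ordr y'"
  shows "Tset y \<subseteq> Tset y' \<or> Tset y' \<subseteq> Tset y"
proof -
  obtain \<alpha> where \<alpha>: "\<alpha> < k" "p y = aff a b \<alpha> y" using pieces by blast
  obtain \<alpha>' where \<alpha>': "\<alpha>' < k" "p y' = aff a b \<alpha>' y'" using pieces by blast
  have T1: "Tset y = {j. j < k \<and> aff a b \<alpha> y' \<le> aff a b j y'}" by (rule Tset_alt[OF \<alpha> assms])
  have T2: "Tset y' = {j. j < k \<and> aff a b \<alpha>' y' \<le> aff a b j y'}" by (rule Tset_alt[OF \<alpha>' refl])
  show ?thesis
  proof (cases "aff a b \<alpha> y' \<le> aff a b \<alpha>' y'")
    case True then show ?thesis unfolding T1 T2 by auto
  next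
    case False then show ?thesis unfolding T1 T2 by auto
  qed
qed

definition Cands :: "(nat \<times> nat) set \<Rightarrow> nat set set" where
  "Cands \<sigma> = Tset ` {y. y \<in> Gen \<and> ordr y = \<sigma>}"

definition pick :: "(nat \<times> nat) set \<Rightarrow> nat set" where
  "pick \<sigma> = (SOME S. S \<in> Cands \<sigma> \<and> (\<forall>S'. S' \<in> Cands \<sigma> \<longrightarrow> card S \<le> card S'))"

lemma pick_props:
  assumes "y \<in> Gen"
  shows "pick (ordr y) \<in> Cands (ordr y) \<and> (\<forall>S'. S' \<in> Cands (ordr y) \<longrightarrow> card (pick (ordr y)) \<le> card S')"
proof -
  have "Tset y \<in> Cands (ordr y)" using assms unfolding Cands_def by blast
  then have "\<exists>S. S \<in> Cands (ordr y) \<and> (\<forall>S'. S' \<in> Cands (ordr y) \<longrightarrow> card S \<le> card S')"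
    using ex_has_least_nat[of "\<lambda>S. S \<in> Cands (ordr y)" "Tset y" card] by blast
  then show ?thesis unfolding pick_def by (rule someI_ex)
qed

lemma pick_sub:
  assumes "y \<in> Gen"
  shows "pick (ordr y) \<subseteq> Tset y"
proof -
  from pick_props[OF assms] obtain y' where y': "y' \<in> Gen" "ordr y' = ordr y" "pick (ordr y) = Tset y'"
    and mn: "\<forall>S'. S' \<in> Cands (ordr y) \<longrightarrow> card (pick (ordr y)) \<le> card S'"
    unfolding Cands_def by auto
  have "Tset y \<in> Cands (ordr y)" using assms unfolding Cands_def by blast
  then have cle: "card (Tset y') \<le> card (Tset y)" using mn y'(3) by simp
  show ?thesis
  proof (cases "Tset y' \<subseteq> Tset y")
    case True then show ?thesis using y'(3) by simp
  next
    case False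
    then have "Tset y \<subseteq> Tset y'" using Tset_compare[OF y'(2)] by blast
    moreover have "finite (Tset y')" using Tset_sub finite_subset by blast
    ultimately have "Tset y = Tset y'" using cle by (metis card_seteq)
    then show ?thesis using y'(3) by simp
  qed
qed

definition Terms :: "nat set set" where
  "Terms = pick ` (ordr ` Gen)"

lemma Terms_Tset: "S \<in> Terms \<Longrightarrow> \<exists>y. y \<in> Gen \<and> S = Tset y"
  using pick_props unfolding Terms_def Cands_def by blast

lemma Terms_props: "S \<in> Terms \<Longrightarrow> S \<noteq> {} \<and> S \<subseteq> {..<k}"
  using Terms_Tset Tset_ne Tset_sub by blast

lemma Terms_finite: "finite Terms"
proof -
  have "Terms \<subseteq> Pow {..<k}" using Terms_props by blast
  then show ?thesis by (rule finite_subset) simp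
qed

lemma Gen_ne: "Gen \<noteq> {}"
  using gen_dense[of UNIV] by auto

lemma Terms_ne: "Terms \<noteq> {}"
  using Gen_ne unfolding Terms_def by blast

lemma term_upper:
  assumes "S \<in> Terms"
  shows "Min ((\<lambda>j. aff a b j x) ` S) \<le> p x"
proof -
  obtain y where y: "y \<in> Gen" "S = Tset y" using Terms_Tset[OF assms] by blast
  obtain j where j: "j < k" "aff a b j y \<ge> p y" "aff a b j x \<le> p x"
    using segment_lemma[OF cont, of k a b y x] pieces unfolding aff_def by blast
  then have "j \<in> S" using y unfolding Tset_def by simp
  then have "Min ((\<lambda>j. aff a b j x) ` S) \<le> aff a b j x"
    using Terms_props[OF assms] by (intro Min_le) (auto intro: finite_subset)
  then show ?thesis using j by simp
qed

lemma term_lower: "\<exists>S\<in>Terms. \<forall>j\<in>S. p x \<le> aff a b j x"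
proof (rule ccontr)
  assume neg: "\<not> ?thesis"
  define C where "C S = {z. \<forall>j\<in>S. p z \<le> aff a b j z}" for S
  have clC: "closed (C S)" if "S \<in> Terms" for S
  proof -
    have "C S = (\<Inter>j\<in>S. {z. p z \<le> aff a b j z})" unfolding C_def by auto
    moreover have "closed {z. p z \<le> aff a b j z}" for j
      by (rule closed_Collect_le) (use cont continuous_aff in auto)
    ultimately show ?thesis by auto
  qed
  define U where "U = - (\<Union>S\<in>Terms. C S)"
  have "open U" unfolding U_def using Terms_finite clC by (intro open_Compl closed_UN) auto
  moreover have "x \<in> U" using neg unfolding U_def C_def by auto
  ultimately obtain z where z: "z \<in> U" "z \<in> Gen" using gen_dense[of U] by blast
  have "pick (ordr z) \<in> Terms" using z(2) unfolding Terms_def by blast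
  moreover have "z \<in> C (pick (ordr z))" using pick_sub[OF z(2)] unfolding C_def Tset_def by auto
  ultimately show False using z(1) unfolding U_def by blast
qed

lemma rep_Terms: "p x = Max ((\<lambda>S. Min ((\<lambda>j. aff a b j x) ` S)) ` Terms)"
proof -
  have fin: "finite ((\<lambda>S. Min ((\<lambda>j. aff a b j x) ` S)) ` Terms)" using Terms_finite by simp
  have ne: "(\<lambda>S. Min ((\<lambda>j. aff a b j x) ` S)) ` Terms \<noteq> {}" using Terms_ne by simp
  have le: "Max ((\<lambda>S. Min ((\<lambda>j. aff a b j x) ` S)) ` Terms) \<le> p x"
    using term_upper fin ne by (simp add: Max_le_iff)
  obtain S where S: "S \<in> Terms" "\<forall>j\<in>S. p x \<le> aff a b j x" using term_lower by blast
  have finS: "finite S" using Terms_props[OF S(1)] finite_subset by blast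
  have "p x \<le> Min ((\<lambda>j. aff a b j x) ` S)" using S(2) Terms_props[OF S(1)] finS by (simp add: Min_ge_iff)
  also have "\<dots> \<le> Max ((\<lambda>S. Min ((\<lambda>j. aff a b j x) ` S)) ` Terms)" using S(1) fin by simp
  finally show ?thesis using le by simp
qed


lemma card_Terms_ord: "card Terms \<le> card (ordr ` Gen)"
  unfolding Terms_def by (rule card_image_le) (rule finite_subset[of _ "Pow ({..<k} \<times> {..<k})"], auto simp: ordr_def)

definition rk :: "real^'n \<Rightarrow> nat \<Rightarrow> nat" where
  "rk y j = (if j < k then card {i. i < k \<and> aff a b i y < aff a b j y} else j)"

lemma rk_less:
  assumes "y \<in> Gen" "i < k" "j < k"
  shows "rk y i < rk y j \<longleftrightarrow> aff a b i y < aff a b j y"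
proof -
  have mono: "rk y i < rk y j" if "aff a b i y < aff a b j y" "i < k" "j < k" for i j
  proof -
    have "{l. l < k \<and> aff a b l y < aff a b i y} \<subset> {l. l < k \<and> aff a b l y < aff a b j y}"
      using that by auto
    then show ?thesis using that unfolding rk_def by (simp add: psubset_card_mono)
  qed
  show ?thesis
  proof
    assume "aff a b i y < aff a b j y" then show "rk y i < rk y j" using mono assms by blast
  next
    assume r: "rk y i < rk y j"
    show "aff a b i y < aff a b j y"
    proof (rule ccontr)
      assume "\<not> aff a b i y < aff a b j y"
      show False
      proof (cases "i = j")
        case True then show False using r by simp
      next
        case False
        then have "aff a b i y \<noteq> aff a b j y" using assms unfolding Gen_def by blast
        then have "aff a b j y < aff a b i y" using \<open>\<not> aff a b i y < aff a b j y\<close> by linarith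
        then have "rk y j < rk y i" using mono[of j i] assms by blast
        then show False using r by simp
      qed
    qed
  qed
qed

lemma rk_permutes:
  assumes "y \<in> Gen"
  shows "rk y permutes {..<k}"
proof (rule bij_imp_permutes)
  have inj: "inj_on (rk y) {..<k}"
  proof (rule inj_onI)
    fix i j assume ij: "i \<in> {..<k}" "j \<in> {..<k}" "rk y i = rk y j"
    show "i = j"
    proof (rule ccontr)
      assume "i \<noteq> j"
      then have "aff a b i y \<noteq> aff a b j y" using assms ij unfolding Gen_def by auto
      then have "aff a b i y < aff a b j y \<or> aff a b j y < aff a b i y" by auto
      then show False using rk_less[OF assms, of i j] rk_less[OF assms, of j i] ij by auto
    qed
  qed
  have into: "rk y ` {..<k} \<subseteq> {..<k}"
  proof
    fix r assume "r \<in> rk y ` {..<k}"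
    then obtain j where j: "j < k" "r = rk y j" by blast
    have "{i. i < k \<and> aff a b i y < aff a b j y} \<subset> {..<k}" using j(1) by auto
    then have "card {i. i < k \<and> aff a b i y < aff a b j y} < card {..<k}"
      by (intro psubset_card_mono) auto
    then have "card {i. i < k \<and> aff a b i y < aff a b j y} < k" by simp
    then show "r \<in> {..<k}" using j unfolding rk_def by simp
  qed
  have "rk y ` {..<k} = {..<k}"
    using card_image[OF inj] into by (intro card_seteq) auto
  then show "bij_betw (rk y) {..<k} {..<k}" using inj unfolding bij_betw_def by blast
qed (simp add: rk_def)

lemma card_ord_fact: "card (ordr ` Gen) \<le> fact k"
proof -
  define F where "F r = {(i, j). i < k \<and> j < k \<and> r i < r j}" for r :: "nat \<Rightarrow> nat"
  have "ordr ` Gen \<subseteq> F ` {r. r permutes {..<k}}"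
  proof
    fix \<sigma> assume "\<sigma> \<in> ordr ` Gen"
    then obtain y where y: "y \<in> Gen" "\<sigma> = ordr y" by blast
    have "ordr y = F (rk y)"
    proof (rule set_eqI)
      fix ij :: "nat \<times> nat"
      obtain i j where ij: "ij = (i, j)" by fastforce
      show "ij \<in> ordr y \<longleftrightarrow> ij \<in> F (rk y)"
        unfolding ij ordr_def F_def using rk_less[OF y(1), of i j] by blast
    qed
    then show "\<sigma> \<in> F ` {r. r permutes {..<k}}" using rk_permutes[OF y(1)] y(2) by blast
  qed
  then have "card (ordr ` Gen) \<le> card (F ` {r. r permutes {..<k}})"
    by (rule card_mono[rotated]) (simp add: finite_permutations)
  also have "\<dots> \<le> card {r. r permutes {..<k}}" by (rule card_image_le) (simp add: finite_permutations)
  also have "\<dots> = fact k" by (rule card_permutations) simp_all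
  finally show ?thesis .
qed


lemma ordr_swap:
  assumes "y \<in> Gen" "i < k" "j < k" "i \<noteq> j"
  shows "(i, j) \<in> ordr y \<longleftrightarrow> (j, i) \<notin> ordr y"
proof -
  have "aff a b i y \<noteq> aff a b j y" using assms unfolding Gen_def by blast
  then show ?thesis using assms unfolding ordr_def by auto
qed

lemma inj_restrict: "inj_on (\<lambda>\<sigma>. \<sigma> \<inter> pairs k) (ordr ` Gen)"
proof (rule inj_onI)
  fix \<sigma>1 \<sigma>2 assume s1: "\<sigma>1 \<in> ordr ` Gen" and s2: "\<sigma>2 \<in> ordr ` Gen" and eq: "\<sigma>1 \<inter> pairs k = \<sigma>2 \<inter> pairs k"
  obtain y1 where y1: "y1 \<in> Gen" "\<sigma>1 = ordr y1" using s1 by blast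
  obtain y2 where y2: "y2 \<in> Gen" "\<sigma>2 = ordr y2" using s2 by blast
  show "\<sigma>1 = \<sigma>2"
  proof (rule set_eqI)
    fix ij :: "nat \<times> nat"
    obtain i j where ij: "ij = (i, j)" by fastforce
    show "ij \<in> \<sigma>1 \<longleftrightarrow> ij \<in> \<sigma>2"
    proof (cases "i < k \<and> j < k")
      case True
      show ?thesis
      proof (cases "i < j")
        case True
        then have "(i, j) \<in> pairs k" using \<open>i < k \<and> j < k\<close> unfolding pairs_def by simp
        then show ?thesis unfolding ij using eq by blast
      next
        case False
        show ?thesis
        proof (cases "i = j")
          case True then show ?thesis unfolding ij y1(2) y2(2) ordr_def by simp
        next
          case False
          then have "j < i" using \<open>\<not> i < j\<close> by simp
          then have jp: "(j, i) \<in> pairs k" using \<open>i < k \<and> j < k\<close> unfolding pairs_def by simp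
          have "(i, j) \<in> \<sigma>1 \<longleftrightarrow> (j, i) \<notin> \<sigma>1" unfolding y1(2) using ordr_swap[OF y1(1)] True False by blast
          moreover have "(i, j) \<in> \<sigma>2 \<longleftrightarrow> (j, i) \<notin> \<sigma>2" unfolding y2(2) using ordr_swap[OF y2(1)] True False by blast
          moreover have "(j, i) \<in> \<sigma>1 \<longleftrightarrow> (j, i) \<in> \<sigma>2" using eq jp by blast
          ultimately show ?thesis unfolding ij by blast
        qed
      qed
    next
      case False
      then show ?thesis unfolding ij y1(2) y2(2) ordr_def by auto
    qed
  qed
qed

lemma lin_dep_family:
  fixes w :: "'e \<Rightarrow> real^'n"
  assumes "finite A" "card A > CARD('n)"
  shows "\<exists>l. (\<exists>e\<in>A. l e \<noteq> 0) \<and> (\<Sum>e\<in>A. l e *\<^sub>R w e) = 0"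
proof (cases "inj_on w A")
  case False
  then obtain e1 e2 where e: "e1 \<in> A" "e2 \<in> A" "e1 \<noteq> e2" "w e1 = w e2" unfolding inj_on_def by blast
  define l where "l e = (if e = e1 then 1 else if e = e2 then -1 else (0::real))" for e
  have "(\<Sum>e\<in>A. l e *\<^sub>R w e) = (\<Sum>e\<in>A. (if e = e1 then w e1 else 0)) + (\<Sum>e\<in>A. (if e = e2 then - w e2 else 0))"
    unfolding sum.distrib[symmetric] by (rule sum.cong) (use e in \<open>auto simp: l_def\<close>)
  also have "\<dots> = 0" using e assms(1) by (simp add: sum.delta)
  finally show ?thesis using e(1) by (intro exI[of _ l]) (auto simp: l_def)
next
  case True
  have "card (w ` A) > DIM(real^'n)" using assms(2) card_image[OF True] by simp
  then have "dependent (w ` A)" using dependent_biggerset by blast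
  then obtain u where u: "\<exists>v\<in>w ` A. u v \<noteq> 0" "(\<Sum>v\<in>w ` A. u v *\<^sub>R v) = 0"
    using dependent_finite[of "w ` A"] assms(1) by auto
  have "(\<Sum>e\<in>A. u (w e) *\<^sub>R w e) = (\<Sum>v\<in>w ` A. u v *\<^sub>R v)"
    using sum.reindex[OF True, of "\<lambda>v. u v *\<^sub>R v"] by simp
  then show ?thesis using u by (intro exI[of _ "\<lambda>e. u (w e)"]) auto
qed

lemma realize_lemma:
  assumes A'p: "A' \<subseteq> pairs k" and shA': "shatters ((\<lambda>\<sigma>. \<sigma> \<inter> pairs k) ` (ordr ` Gen)) A'" and BA: "B \<subseteq> A'"
  shows "\<exists>y\<in>Gen. \<forall>e\<in>A'. (0 < aff a b (snd e) y - aff a b (fst e) y \<longleftrightarrow> e \<in> B)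
      \<and> aff a b (snd e) y - aff a b (fst e) y \<noteq> 0"
proof -
  have inA: "fst e < snd e \<and> snd e < k" if "e \<in> A'" for e
  proof -
    have "e \<in> pairs k" using A'p that by blast
    then show ?thesis by (cases e) (simp add: pairs_def)
  qed
  have "\<forall>B\<subseteq>A'. \<exists>F\<in>(\<lambda>\<sigma>. \<sigma> \<inter> pairs k) ` (ordr ` Gen). F \<inter> A' = B"
    using shA' unfolding shatters_def .
  then have "\<exists>F\<in>(\<lambda>\<sigma>. \<sigma> \<inter> pairs k) ` (ordr ` Gen). F \<inter> A' = B" using BA by simp
  then obtain F where F: "F \<in> (\<lambda>\<sigma>. \<sigma> \<inter> pairs k) ` (ordr ` Gen)" "F \<inter> A' = B"
    by (rule bexE)
  from F(1) have "\<exists>\<sigma>\<in>ordr ` Gen. F = \<sigma> \<inter> pairs k" by (simp only: image_iff)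
  then obtain \<sigma> where s: "\<sigma> \<in> ordr ` Gen" "F = \<sigma> \<inter> pairs k" by (rule bexE)
  from s(1) have "\<exists>y\<in>Gen. \<sigma> = ordr y" by (simp only: image_iff)
  then obtain y where y0: "y \<in> Gen" "\<sigma> = ordr y" by (rule bexE)
  have y: "y \<in> Gen" "F = ordr y \<inter> pairs k" using y0 s(2) by simp_all
  have "\<forall>e\<in>A'. (0 < aff a b (snd e) y - aff a b (fst e) y \<longleftrightarrow> e \<in> B)
    \<and> aff a b (snd e) y - aff a b (fst e) y \<noteq> 0"
  proof
    fix e assume e: "e \<in> A'"
    have ep: "e \<in> pairs k" using e A'p by blast
    have Beq: "B = ordr y \<inter> pairs k \<inter> A'" using F(2) y(2) by simp
    have "e \<in> B \<longleftrightarrow> e \<in> ordr y" unfolding Beq using e ep by simp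
    also have "\<dots> \<longleftrightarrow> aff a b (fst e) y < aff a b (snd e) y"
      using inA[OF e] unfolding ordr_def by (simp add: case_prod_beta)
    finally have 1: "0 < aff a b (snd e) y - aff a b (fst e) y \<longleftrightarrow> e \<in> B" by simp
    have fe: "fst e < k" "snd e < k" "fst e \<noteq> snd e" using inA[OF e] by auto
    have G: "\<forall>i<k. \<forall>j<k. i \<noteq> j \<longrightarrow> aff a b i y \<noteq> aff a b j y" using y(1) unfolding Gen_def by simp
    have "aff a b (fst e) y \<noteq> aff a b (snd e) y" using G fe by simp
    then show "(0 < aff a b (snd e) y - aff a b (fst e) y \<longleftrightarrow> e \<in> B)
        \<and> aff a b (snd e) y - aff a b (fst e) y \<noteq> 0" using 1 by simp
  qed
  then show ?thesis using y(1) by (rule_tac bexI)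
qed

lemma no_big_shatter:
  assumes "A \<subseteq> pairs k" "shatters ((\<lambda>\<sigma>. \<sigma> \<inter> pairs k) ` (ordr ` Gen)) A"
  shows "card A \<le> CARD('n)"
proof (rule ccontr)
  assume "\<not> card A \<le> CARD('n)"
  have finA: "finite A" using assms(1) pairs_finite finite_subset by blast
  obtain A' where A': "A' \<subseteq> A" "card A' = Suc CARD('n)"
    using obtain_subset_with_card_n[of "Suc CARD('n)" A] \<open>\<not> card A \<le> CARD('n)\<close> by force
  have finA': "finite A'" using A'(1) finA finite_subset by blast
  have shA': "shatters ((\<lambda>\<sigma>. \<sigma> \<inter> pairs k) ` (ordr ` Gen)) A'" using shatters_subset[OF assms(2) A'(1)] .
  define w where "w e = a (snd e) - a (fst e)" for e :: "nat \<times> nat"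
  define c where "c e = b (snd e) - b (fst e)" for e :: "nat \<times> nat"
  obtain l where l: "\<exists>e\<in>A'. l e \<noteq> 0" "(\<Sum>e\<in>A'. l e *\<^sub>R w e) = 0"
    using lin_dep_family[OF finA', of w] A'(2) by auto
  obtain e0 where e0: "e0 \<in> A'" "l e0 \<noteq> 0" using l(1) by blast
  have hsum: "(\<Sum>e\<in>A'. l e * (aff a b (snd e) y - aff a b (fst e) y)) = (\<Sum>e\<in>A'. l e * c e)" for y
  proof -
    have "(\<Sum>e\<in>A'. l e * (aff a b (snd e) y - aff a b (fst e) y)) = (\<Sum>e\<in>A'. l e * (w e \<bullet> y) + l e * c e)"
    proof (rule sum.cong)
      fix e assume "e \<in> A'"
      show "l e * (aff a b (snd e) y - aff a b (fst e) y) = l e * (w e \<bullet> y) + l e * c e"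
        unfolding aff_def w_def c_def inner_diff_left by (simp add: right_diff_distrib distrib_left)
    qed simp
    also have "\<dots> = (\<Sum>e\<in>A'. l e *\<^sub>R w e) \<bullet> y + (\<Sum>e\<in>A'. l e * c e)"
      by (simp add: sum.distrib inner_sum_left)
    finally show ?thesis using l(2) by simp
  qed
  have inA: "fst e < snd e \<and> snd e < k" if "e \<in> A'" for e
  proof -
    have "e \<in> pairs k" using A'(1) assms(1) that by blast
    then show ?thesis by (cases e) (simp add: pairs_def)
  qed
  have realize: "\<exists>y\<in>Gen. \<forall>e\<in>A'. (0 < aff a b (snd e) y - aff a b (fst e) y \<longleftrightarrow> e \<in> B)
      \<and> aff a b (snd e) y - aff a b (fst e) y \<noteq> 0" if "B \<subseteq> A'" for B
    by (rule realize_lemma[OF _ shA' that]) (use A'(1) assms(1) in blast)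
  obtain y1 where y1: "\<forall>e\<in>A'. (0 < aff a b (snd e) y1 - aff a b (fst e) y1 \<longleftrightarrow> e \<in> {e\<in>A'. l e > 0})
      \<and> aff a b (snd e) y1 - aff a b (fst e) y1 \<noteq> 0" using realize[of "{e\<in>A'. l e > 0}"] by blast
  obtain y2 where y2: "\<forall>e\<in>A'. (0 < aff a b (snd e) y2 - aff a b (fst e) y2 \<longleftrightarrow> e \<in> {e\<in>A'. l e < 0})
      \<and> aff a b (snd e) y2 - aff a b (fst e) y2 \<noteq> 0" using realize[of "{e\<in>A'. l e < 0}"] by blast
  have pos: "0 < (\<Sum>e\<in>A'. l e * (aff a b (snd e) y1 - aff a b (fst e) y1))"
  proof (rule sum_pos2[OF finA' e0(1)])
    have d: "0 < aff a b (snd e) y1 - aff a b (fst e) y1 \<longleftrightarrow> 0 < l e"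
      "aff a b (snd e) y1 - aff a b (fst e) y1 \<noteq> 0" if "e \<in> A'" for e using y1 that by auto
    show "0 < l e0 * (aff a b (snd e0) y1 - aff a b (fst e0) y1)"
      using d[OF e0(1)] e0(2) by (cases "l e0 > 0") (auto simp: zero_less_mult_iff)
    show "\<And>e. e \<in> A' \<Longrightarrow> 0 \<le> l e * (aff a b (snd e) y1 - aff a b (fst e) y1)"
      using d by (fastforce simp: zero_le_mult_iff)
  qed
  have neg: "0 < (\<Sum>e\<in>A'. - (l e * (aff a b (snd e) y2 - aff a b (fst e) y2)))"
  proof (rule sum_pos2[OF finA' e0(1)])
    have d: "0 < aff a b (snd e) y2 - aff a b (fst e) y2 \<longleftrightarrow> l e < 0"
      "aff a b (snd e) y2 - aff a b (fst e) y2 \<noteq> 0" if "e \<in> A'" for e using y2 that by auto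
    show "0 < - (l e0 * (aff a b (snd e0) y2 - aff a b (fst e0) y2))"
      using d[OF e0(1)] e0(2) by (cases "l e0 > 0") (auto simp: mult_less_0_iff)
    show "\<And>e. e \<in> A' \<Longrightarrow> 0 \<le> - (l e * (aff a b (snd e) y2 - aff a b (fst e) y2))"
      using d by (fastforce simp: mult_le_0_iff)
  qed
  show False using pos neg hsum[of y1] hsum[of y2] by (simp add: sum_negf)
qed

lemma card_ord_binom: "card (ordr ` Gen) \<le> (\<Sum>i\<le>CARD('n). ((k ^ 2 - k) div 2) choose i)"
proof -
  have "card (ordr ` Gen) = card ((\<lambda>\<sigma>. \<sigma> \<inter> pairs k) ` (ordr ` Gen))"
    using card_image[OF inj_restrict] by simp
  also have "\<dots> \<le> (\<Sum>i\<le>CARD('n). card (pairs k) choose i)"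
    by (rule sauer_shelah[OF pairs_finite]) (auto intro: no_big_shatter)
  finally show ?thesis by (simp add: pairs_card')
qed


lemma card_Terms_phi: "card Terms \<le> phi CARD('n) k"
  using card_Terms_ord card_ord_fact card_ord_binom unfolding phi_def by simp

lemma maxmin_rep:
  assumes k: "k \<ge> 1"
  shows "\<exists>M idx. 1 \<le> M \<and> M \<le> phi CARD('n) k \<and>
    (\<forall>x. p x = Max ((\<lambda>g. Min ((\<lambda>i. a (idx g i) \<bullet> x + b (idx g i)) ` {..<k})) ` {..<M}))"
proof -
  define M where "M = card Terms"
  have M1: "1 \<le> M" using Terms_finite Terms_ne unfolding M_def by (simp add: Suc_le_eq card_gt_0_iff)
  obtain tf where tf: "bij_betw tf {0..<M} Terms" using ex_bij_betw_nat_finite[OF Terms_finite] unfolding M_def by blast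
  define sf where "sf S = (SOME h. bij_betw h {0..<card S} S)" for S :: "nat set"
  have sf: "bij_betw (sf S) {0..<card S} S" if "finite S" for S
    unfolding sf_def using ex_bij_betw_nat_finite[OF that] by (rule someI_ex)
  define idx where "idx g i = (if i < card (tf g) then sf (tf g) i else sf (tf g) 0)" for g i
  have idx_img: "idx g ` {..<k} = tf g" if g: "g < M" for g
  proof -
    define S where "S = tf g"
    have SI: "S \<in> Terms" using tf g unfolding S_def bij_betw_def by auto
    have Sne: "S \<noteq> {}" and Sk: "S \<subseteq> {..<k}" using Terms_props[OF SI] by auto
    have finS: "finite S" using Sk finite_subset by blast
    have c1: "card S \<ge> 1" using Sne finS by (simp add: Suc_le_eq card_gt_0_iff)
    have ck: "card S \<le> k" using card_mono[OF _ Sk] by simp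
    have img: "sf S ` {0..<card S} = S" using sf[OF finS] unfolding bij_betw_def by blast
    have "idx g ` {..<k} = (\<lambda>i. if i < card S then sf S i else sf S 0) ` {..<k}"
      unfolding idx_def S_def by simp
    also have "\<dots> = S"
    proof
      show "(\<lambda>i. if i < card S then sf S i else sf S 0) ` {..<k} \<subseteq> S"
        using img c1 by auto
      show "S \<subseteq> (\<lambda>i. if i < card S then sf S i else sf S 0) ` {..<k}"
      proof
        fix j assume "j \<in> S"
        then have "j \<in> sf S ` {0..<card S}" using img by simp
        then obtain i where "i < card S" "j = sf S i" by auto
        then show "j \<in> (\<lambda>i. if i < card S then sf S i else sf S 0) ` {..<k}"
          using ck by (intro image_eqI[of _ _ i]) auto
      qed
    qed
    finally show ?thesis unfolding S_def .
  qed
  have rep: "p x = Max ((\<lambda>g. Min ((\<lambda>i. a (idx g i) \<bullet> x + b (idx g i)) ` {..<k})) ` {..<M})" for x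
  proof -
    have "(\<lambda>g. Min ((\<lambda>i. a (idx g i) \<bullet> x + b (idx g i)) ` {..<k})) ` {..<M}
        = (\<lambda>g. Min ((\<lambda>j. aff a b j x) ` tf g)) ` {..<M}"
    proof (rule image_cong[OF refl])
      fix g assume "g \<in> {..<M}"
      then have "(\<lambda>i. a (idx g i) \<bullet> x + b (idx g i)) ` {..<k} = (\<lambda>j. aff a b j x) ` (idx g ` {..<k})"
        by (simp add: image_image aff_def)
      then show "Min ((\<lambda>i. a (idx g i) \<bullet> x + b (idx g i)) ` {..<k}) = Min ((\<lambda>j. aff a b j x) ` tf g)"
        using idx_img \<open>g \<in> {..<M}\<close> by simp
    qed
    also have "\<dots> = (\<lambda>S. Min ((\<lambda>j. aff a b j x) ` S)) ` (tf ` {0..<M})"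
      by (simp add: image_image lessThan_atLeast0)
    also have "tf ` {0..<M} = Terms" using tf unfolding bij_betw_def by blast
    finally show ?thesis using rep_Terms by simp
  qed
  show ?thesis using M1 card_Terms_phi rep unfolding M_def[symmetric] by blast
qed

end


lemma cover_interior:
  fixes p :: "real^'n \<Rightarrow> real"
  assumes cov: "cpwl_cover p (min_cover_size p) V" and i: "i < min_cover_size p"
  shows "\<exists>W. open W \<and> W \<noteq> {} \<and> W \<subseteq> V i"
proof (rule ccontr)
  assume neg: "\<not> ?thesis"
  define m0 where "m0 = min_cover_size p"
  have m0pos: "m0 \<ge> 1" using i unfolding m0_def by simp
  have int: "interior (V i) = {}"
  proof (rule ccontr)
    assume "interior (V i) \<noteq> {}"
    then show False using neg interior_subset[of "V i"] open_interior[of "V i"] by blast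
  qed
  have clV: "\<And>j. j < m0 \<Longrightarrow> closed (V j)" using cov unfolding cpwl_cover_def m0_def by blast
  have unV: "(\<Union>j<m0. V j) = UNIV" using cov unfolding cpwl_cover_def m0_def by blast
  have afV: "\<And>j. j < m0 \<Longrightarrow> \<exists>f. affine_fun f \<and> (\<forall>x\<in>V j. p x = f x)"
    using cov unfolding cpwl_cover_def m0_def by blast
  define C where "C = (\<Union>j\<in>{..<m0} - {i}. V j)"
  have clC: "closed C" unfolding C_def using clV by (intro closed_UN) auto
  have "- V i \<subseteq> C" using unV unfolding C_def by auto
  then have "closure (- V i) \<subseteq> C" using clC by (rule closure_minimal)
  then have CU: "C = UNIV" using int by (simp add: closure_complement top_le)
  define ix where "ix j = (if j < i then j else Suc j)" for j
  define V' where "V' j = V (ix j)" for j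
  have ixr: "j < m0 - 1 \<Longrightarrow> ix j < m0 \<and> ix j \<noteq> i" for j unfolding ix_def using i m0_def by auto
  have "(\<Union>j<m0 - 1. V' j) = C"
  proof
    show "(\<Union>j<m0 - 1. V' j) \<subseteq> C" unfolding V'_def C_def using ixr by fastforce
    show "C \<subseteq> (\<Union>j<m0 - 1. V' j)"
    proof
      fix x assume "x \<in> C"
      then obtain j where j: "j < m0" "j \<noteq> i" "x \<in> V j" unfolding C_def by blast
      show "x \<in> (\<Union>j<m0 - 1. V' j)"
      proof (cases "j < i")
        case True
        then have "ix j = j" "j < m0 - 1" using i m0_def unfolding ix_def by auto
        then show ?thesis using j unfolding V'_def by (intro UN_I[of j]) auto
      next
        case False
        then have "ix (j - 1) = j" "j - 1 < m0 - 1" using j unfolding ix_def by auto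
        then show ?thesis using j unfolding V'_def by (intro UN_I[of "j - 1"]) auto
      qed
    qed
  qed
  then have "cpwl_cover p (m0 - 1) V'"
    unfolding cpwl_cover_def V'_def using CU clV afV ixr by auto
  then have "min_cover_size p \<le> m0 - 1" unfolding min_cover_size_def by (intro Least_le) blast
  then show False using m0pos unfolding m0_def by simp
qed

lemma components:
  fixes p :: "real^'n \<Rightarrow> real"
  assumes "is_cpwl p"
  shows "\<exists>a b. (\<forall>x. \<exists>j<num_components p. p x = a j \<bullet> x + b j) \<and>
    (\<forall>i<num_components p. \<forall>j<num_components p. i \<noteq> j \<longrightarrow> (a i, b i) \<noteq> (a j, b j)) \<and>
    num_components p \<ge> 1"
proof -
  define m0 where "m0 = min_cover_size p"
  have "\<exists>m U. cpwl_cover p m U" using assms unfolding is_cpwl_def by blast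
  then have "\<exists>U. cpwl_cover p m0 U" unfolding m0_def min_cover_size_def by (rule LeastI_ex)
  then obtain U0 where U0: "cpwl_cover p m0 U0" by blast
  have m0pos: "m0 \<ge> 1"
  proof (rule ccontr)
    assume "\<not> m0 \<ge> 1"
    then have "m0 = 0" by simp
    then show False using U0 unfolding cpwl_cover_def by simp
  qed
  define gf where "gf i = (SOME f. affine_fun f \<and> (\<forall>x\<in>U0 i. p x = f x))" for i
  have gf: "affine_fun (gf i) \<and> (\<forall>x\<in>U0 i. p x = gf i x)" if "i < m0" for i
  proof -
    have "\<forall>i<m0. \<exists>f. affine_fun f \<and> (\<forall>x\<in>U0 i. p x = f x)" using U0 unfolding cpwl_cover_def by (elim conjE)
    then have "\<exists>f. affine_fun f \<and> (\<forall>x\<in>U0 i. p x = f x)" using that by simp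
    then show ?thesis unfolding gf_def by (rule someI_ex)
  qed
  have LC: "linear_components p = gf ` {..<m0}"
  proof
    show "gf ` {..<m0} \<subseteq> linear_components p"
    proof
      fix f assume "f \<in> gf ` {..<m0}"
      then obtain i where i: "i < m0" "f = gf i" by blast
      show "f \<in> linear_components p"
        unfolding linear_components_def m0_def[symmetric]
      proof (intro CollectI conjI exI[of _ U0] exI[of _ "{i}"])
        show "affine_fun f" using gf[OF i(1)] i(2) by simp
        show "cpwl_cover p m0 U0" by (rule U0)
        show "{i} \<subseteq> {..<m0}" using i(1) by simp
        show "{i} \<noteq> {}" by simp
        show "\<forall>x\<in>(\<Union>i\<in>{i}. U0 i). p x = f x" using gf[OF i(1)] i(2) by simp
      qed
    qed
    show "linear_components p \<subseteq> gf ` {..<m0}"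
    proof
      fix f assume "f \<in> linear_components p"
      then obtain V S where f: "affine_fun f" "cpwl_cover p m0 V" "S \<subseteq> {..<m0}" "S \<noteq> {}"
        "\<forall>x\<in>(\<Union>i\<in>S. V i). p x = f x"
        unfolding linear_components_def m0_def by blast
      obtain i where iS: "i \<in> S" using f(4) by blast
      then have im: "i < m0" using f(3) by auto
      obtain W where W: "open W" "W \<noteq> {}" "W \<subseteq> V i"
        using cover_interior[OF f(2)[unfolded m0_def] im[unfolded m0_def]] by blast
      have UU: "(\<Union>j<m0. U0 j) = UNIV" using U0 unfolding cpwl_cover_def by (elim conjE)
      have "W \<subseteq> (\<Union>j\<in>{..<m0}. U0 j)" using UU by simp
      moreover have "\<And>j. j \<in> {..<m0} \<Longrightarrow> closed (U0 j)" using U0 unfolding cpwl_cover_def by simp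
      ultimately obtain j W' where jW: "j \<in> {..<m0}" "open W'" "W' \<noteq> {}" "W' \<subseteq> U0 j \<inter> W"
        using finite_closed_cover_interior[of "{..<m0}" U0 W] W by blast
      obtain x0 where x0: "x0 \<in> W'" using jW(3) by blast
      obtain a1 b1 where fa: "\<And>x. f x = a1 \<bullet> x + b1" using f(1) unfolding affine_fun_def by blast
      obtain a2 b2 where ga: "\<And>x. gf j x = a2 \<bullet> x + b2" using gf[of j] jW(1) unfolding affine_fun_def by auto
      have agree: "a1 \<bullet> x + b1 = a2 \<bullet> x + b2" if "x \<in> W'" for x
      proof -
        have "p x = f x" using f(5) iS that jW(4) W(3) by blast
        moreover have "p x = gf j x" using gf[of j] jW(1,4) that by auto
        ultimately show ?thesis using fa ga by simp
      qed
      have "a1 = a2 \<and> b1 = b2" by (rule affine_agree_open[OF jW(2) x0 agree])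
      then have "f = gf j" using fa ga by (intro ext) simp
      then show "f \<in> gf ` {..<m0}" using jW(1) by blast
    qed
  qed
  define k where "k = num_components p"
  have kc: "k = card (gf ` {..<m0})" unfolding k_def num_components_def LC ..
  have finLC: "finite (gf ` {..<m0})" by simp
  have k1: "k \<ge> 1" unfolding kc using m0pos finLC by (simp add: Suc_le_eq card_gt_0_iff lessThan_empty_iff)
  obtain e where e: "bij_betw e {0..<k} (gf ` {..<m0})" using ex_bij_betw_nat_finite[OF finLC] unfolding kc by blast
  have eaff: "\<exists>ab. \<forall>x. e j x = fst ab \<bullet> x + snd ab" if "j < k" for j
  proof -
    have "e j \<in> gf ` {..<m0}" using e that unfolding bij_betw_def by auto
    then obtain i where "i < m0" "e j = gf i" by blast
    then obtain a' b' where "\<forall>x. e j x = a' \<bullet> x + b'" using gf[of i] unfolding affine_fun_def by auto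
    then show ?thesis by (intro exI[of _ "(a', b')"]) simp
  qed
  define ab where "ab j = (SOME ab. \<forall>x. e j x = fst ab \<bullet> x + snd ab)" for j
  have abp: "\<forall>x. e j x = fst (ab j) \<bullet> x + snd (ab j)" if "j < k" for j
    unfolding ab_def using eaff[OF that] by (rule someI_ex)
  define a where "a j = fst (ab j)" for j
  define b where "b j = snd (ab j)" for j
  have pieces: "\<exists>j<k. p x = a j \<bullet> x + b j" for x
  proof -
    have UU: "(\<Union>j<m0. U0 j) = UNIV" using U0 unfolding cpwl_cover_def by (elim conjE)
    have "x \<in> (\<Union>i<m0. U0 i)" using UU by simp
    then obtain i where i: "i < m0" "x \<in> U0 i" by blast
    then have "gf i \<in> e ` {0..<k}" using e unfolding bij_betw_def by auto
    then obtain j where j: "j < k" "gf i = e j" by auto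
    have "p x = gf i x" using gf[OF i(1)] i(2) by blast
    then show ?thesis using j abp[OF j(1)] unfolding a_def b_def by auto
  qed
  have dstn: "(a i, b i) \<noteq> (a j, b j)" if "i < k" "j < k" "i \<noteq> j" for i j
  proof
    assume eq: "(a i, b i) = (a j, b j)"
    have "e i = e j" using abp[OF that(1)] abp[OF that(2)] eq unfolding a_def b_def by (intro ext) simp
    moreover have "inj_on e {0..<k}" using e unfolding bij_betw_def by blast
    ultimately show False using that unfolding inj_on_def by auto
  qed
  show ?thesis using pieces dstn k1 unfolding k_def by blast
qed


lemma foldr_max_le: "(\<And>w. w \<in> set ks \<Longrightarrow> w \<le> B) \<Longrightarrow> foldr max ks (0::nat) \<le> B"
  by (induction ks) auto

lemma sum_list_mult: "sum_list (map ((*) (c::nat)) xs) = c * sum_list xs"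
  by (induction xs) (auto simp: algebra_simps)

lemma phi_one: "phi n 1 = 1"
proof -
  have "(\<Sum>i\<le>n. (0::nat) choose i) = (\<Sum>i\<le>n. (if i = 0 then 1 else 0))"
    by (rule sum.cong) auto
  also have "\<dots> = 1" by (simp add: sum.delta')
  finally show ?thesis unfolding phi_def by simp
qed

lemma phi_ge2: assumes "k \<ge> 2" "n \<ge> 1" shows "phi n k \<ge> 2"
proof -
  define N where "N = (k ^ 2 - k) div 2"
  have "k * k \<ge> 2 * k" using assms(1) by (intro mult_right_mono) auto
  then have N1: "N \<ge> 1" unfolding N_def power2_eq_square using assms(1) by linarith
  have "(\<Sum>i\<le>1. N choose i) \<le> (\<Sum>i\<le>n. N choose i)" using assms(2) by (intro sum_mono2) auto
  moreover have "(\<Sum>i\<le>1. N choose i) = 1 + N" by (simp add: atMost_Suc)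
  ultimately have s: "(\<Sum>i\<le>n. N choose i) \<ge> 2" using N1 by simp
  have "fact 2 \<le> (fact k :: nat)" using assms(1) by (rule fact_mono)
  then have f: "fact k \<ge> (2::nat)" by simp
  show ?thesis using s f unfolding phi_def N_def[symmetric] by simp
qed

lemma ceil_3k2: "of_int \<lceil>3 * real k / 2\<rceil> = real ((3 * k + 1) div 2)"
proof (cases "even k")
  case True
  then obtain t where t: "k = 2 * t" by (elim evenE)
  have "(3 * k + 1) div 2 = 3 * t" unfolding t by presburger
  moreover have "3 * real k / 2 = real (3 * t)" unfolding t by simp
  ultimately show ?thesis by (simp only: ceiling_of_nat)
next
  case False
  then obtain t where t: "k = 2 * t + 1" by (elim oddE)
  have "(3 * k + 1) div 2 = 3 * t + 2" unfolding t by presburger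
  moreover have "\<lceil>3 * real k / 2\<rceil> = int (3 * t + 2)"
    by (rule ceiling_unique) (simp_all add: t)
  ultimately show ?thesis by simp
qed


theorem theorem3:
  fixes p :: "real^'n \<Rightarrow> real"
  assumes "is_cpwl p"
  defines "k \<equiv> num_components p"
      and "\<phi> \<equiv> phi CARD('n) (num_components p)"
  shows "\<exists>ks W1 b1 Ls. relu_net_wf ks Ls \<and> (\<forall>x. p x = relu_net_eval ks W1 b1 Ls x) \<and>
     real (num_layers ks) \<le> of_int (\<lceil>log 2 (real \<phi>)\<rceil> + \<lceil>log 2 (real k)\<rceil> + 1) \<and>
     real (max_width ks) \<le> (if k > 1 then of_int \<lceil>3 * real k / 2\<rceil> else 0) * real \<phi> \<and>
     real (hidden_neurons ks) \<le>
        (3 * 2 ^ nat \<lceil>log 2 (real k)\<rceil> + 2 * of_int \<lceil>log 2 (real k)\<rceil> - 3) * real \<phi>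
        + 3 * 2 ^ nat \<lceil>log 2 (real \<phi>)\<rceil> - 2 * of_int \<lceil>log 2 (real k)\<rceil> - 3"
proof -
  obtain a b where pc: "\<And>x. \<exists>j<k. p x = a j \<bullet> x + b j"
    and dstn: "\<And>i j. i < k \<Longrightarrow> j < k \<Longrightarrow> i \<noteq> j \<Longrightarrow> (a i, b i) \<noteq> (a j, b j)"
    and k1: "k \<ge> 1"
    using components[OF assms(1)] unfolding k_def by blast
  have cont: "continuous_on UNIV p" using assms(1) unfolding is_cpwl_def by blast
  have pc': "\<And>x. \<exists>j<k. p x = aff a b j x" using pc unfolding aff_def .
  have \<phi>k: "\<phi> = phi CARD('n) k" unfolding \<phi>_def k_def ..
  obtain M idx where M1: "1 \<le> M" and M\<phi>: "M \<le> \<phi>"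
    and rep: "\<And>x. p x = Max ((\<lambda>g. Min ((\<lambda>i. a (idx g i) \<bullet> x + b (idx g i)) ` {..<k})) ` {..<M})"
    using maxmin_rep[OF cont pc' dstn k1] unfolding \<phi>k by blast
  define ks where "ks = stage_ks M k @ stage_ks 1 M"
  obtain W1 b1 Ls where wf: "relu_net_wf ks Ls" and ev: "\<forall>x. p x = relu_net_eval ks W1 b1 Ls x"
    using network_from_maxmin[OF k1 M1 rep] unfolding ks_def by blast
  define K where "K = length (stage_ks 1 k)"
  define LM where "LM = length (stage_ks 1 M)"
  define L where "L = length (stage_ks 1 \<phi>)"
  have \<phi>1: "\<phi> \<ge> 1" using M1 M\<phi> by simp
  have logk: "\<lceil>log 2 (real k)\<rceil> = int K" unfolding K_def by (rule stage_ks_log[OF k1])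
  have logM: "\<lceil>log 2 (real M)\<rceil> = int LM" unfolding LM_def by (rule stage_ks_log[OF M1])
  have log\<phi>: "\<lceil>log 2 (real \<phi>)\<rceil> = int L" unfolding L_def by (rule stage_ks_log[OF \<phi>1])
  have LML: "LM \<le> L"
  proof -
    have "log 2 (real M) \<le> log 2 (real \<phi>)" using M1 M\<phi> by simp
    then have "\<lceil>log 2 (real M)\<rceil> \<le> \<lceil>log 2 (real \<phi>)\<rceil>" by (rule ceiling_mono)
    then show ?thesis using logM log\<phi> by simp
  qed
  have lenMk: "length (stage_ks M k) = K" unfolding K_def by (subst stage_ks_map) simp
  have layers: "real (num_layers ks) \<le> of_int (\<lceil>log 2 (real \<phi>)\<rceil> + \<lceil>log 2 (real k)\<rceil> + 1)"
    unfolding num_layers_def ks_def logk log\<phi> using lenMk LML unfolding LM_def by simp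
  have width: "real (max_width ks) \<le> (if k > 1 then of_int \<lceil>3 * real k / 2\<rceil> else 0) * real \<phi>"
  proof (cases "k > 1")
    case True
    define c where "c = (3 * k + 1) div 2"
    have c3: "c \<ge> 3" using True unfolding c_def by linarith
    have "max_width ks \<le> c * \<phi>"
      unfolding max_width_def
    proof (rule foldr_max_le)
      fix w assume "w \<in> set ks"
      then have "w \<in> set (stage_ks M k) \<or> w \<in> set (stage_ks 1 M)" unfolding ks_def by auto
      then show "w \<le> c * \<phi>"
      proof
        assume "w \<in> set (stage_ks M k)"
        then have "w \<le> M * c" using stage_ks_width[of w M k] unfolding c_def by simp
        also have "\<dots> \<le> \<phi> * c" using M\<phi> by (rule mult_right_mono) simp
        finally show ?thesis by (simp add: mult.commute)
      next
        assume "w \<in> set (stage_ks 1 M)"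
        then have "w \<le> 1 * ((3 * M + 1) div 2)" using stage_ks_width[of w 1 M] by simp
        also have "\<dots> \<le> 3 * \<phi>" using M\<phi> by linarith
        also have "\<dots> \<le> c * \<phi>" using c3 by (rule mult_right_mono) simp
        finally show ?thesis .
      qed
    qed
    then have "real (max_width ks) \<le> real (c * \<phi>)" by (simp only: of_nat_le_iff)
    then have "real (max_width ks) \<le> real c * real \<phi>" by simp
    then show ?thesis using True ceil_3k2[of k] unfolding c_def by simp
  next
    case False
    then have "k = 1" using k1 by simp
    then have "\<phi> = 1" unfolding \<phi>k using phi_one by simp
    then have "M = 1" using M1 M\<phi> by simp
    then have "ks = []" unfolding ks_def using \<open>k = 1\<close> by (simp add: stage_ks.simps)
    then show ?thesis using False by (simp add: max_width_def)
  qed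
  define s where "s = sum_list (stage_ks 1 k)"
  define t where "t = sum_list (stage_ks 1 M)"
  have hn: "hidden_neurons ks = M * s + t"
    unfolding hidden_neurons_def ks_def s_def t_def by (subst stage_ks_map) (simp add: sum_list_mult)
  have sb: "2 * s + 6 \<le> 6 * 2 ^ K + K" unfolding s_def K_def by (rule stage_ks_sum[OF k1])
  have tb: "2 * t + 6 \<le> 6 * 2 ^ LM + LM" unfolding t_def LM_def by (rule stage_ks_sum[OF M1])
  have pLM: "(2::nat) ^ LM \<le> 2 ^ L" using LML by (simp add: power_increasing)
  have sbr: "2 * real s + 6 \<le> 6 * 2 ^ K + real K"
  proof -
    have "real (2 * s + 6) \<le> real (6 * 2 ^ K + K)" using sb by (simp only: of_nat_le_iff)
    then show ?thesis by simp
  qed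
  have tbr: "2 * real t + 6 \<le> 6 * 2 ^ L + real L"
  proof -
    have "2 * t + 6 \<le> 6 * 2 ^ L + L" using tb pLM LML by linarith
    then have "real (2 * t + 6) \<le> real (6 * 2 ^ L + L)" by (simp only: of_nat_le_iff)
    then show ?thesis by simp
  qed
  have hidden: "real (hidden_neurons ks) \<le>
        (3 * 2 ^ nat \<lceil>log 2 (real k)\<rceil> + 2 * of_int \<lceil>log 2 (real k)\<rceil> - 3) * real \<phi>
        + 3 * 2 ^ nat \<lceil>log 2 (real \<phi>)\<rceil> - 2 * of_int \<lceil>log 2 (real k)\<rceil> - 3"
  proof -
    have P1: "(2::real) ^ K \<ge> 1" by simp
    have P2: "(2::real) ^ L \<ge> 1" by simp
    have h1: "real M * real s \<le> real \<phi> * real s" using M\<phi> by (intro mult_right_mono) simp_all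
    have h2: "real \<phi> * (2 * real s + 6) \<le> real \<phi> * (6 * 2 ^ K + real K)"
      using sbr by (intro mult_left_mono) simp_all
    have goal: "real M * real s + real t \<le> (3 * 2 ^ K + 2 * real K - 3) * real \<phi> + 3 * 2 ^ L - 2 * real K - 3"
    proof (cases "K = 0")
      case True
      then have "k \<le> 1" using stage_ks_len_pow[OF k1, of 1] unfolding K_def by simp
      then have "k = 1" using k1 by simp
      then have "\<phi> = 1" unfolding \<phi>k using phi_one by simp
      then have "M = 1" using M1 M\<phi> by simp
      have "s = 0" unfolding s_def using \<open>k = 1\<close> by (simp add: stage_ks.simps)
      have "t = 0" unfolding t_def using \<open>M = 1\<close> by (simp add: stage_ks.simps)
      show ?thesis using True \<open>\<phi> = 1\<close> \<open>s = 0\<close> \<open>t = 0\<close> P2 by simp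
    next
      case False
      then have K1: "real K \<ge> 1" by simp
      have "k \<ge> 2"
      proof (rule ccontr)
        assume "\<not> k \<ge> 2"
        then have "k = 1" using k1 by simp
        then show False using False unfolding K_def by (simp add: stage_ks.simps)
      qed
      have "CARD('n) \<ge> 1" by (simp add: Suc_le_eq)
      then have \<phi>2: "real \<phi> \<ge> 2" using phi_ge2[OF \<open>k \<ge> 2\<close>] unfolding \<phi>k by simp
      have "L \<le> \<phi> - 1" unfolding L_def by (rule stage_ks_len_le)
      then have Lr: "real L \<le> real \<phi> - 1" using \<phi>1 by linarith
      have h3: "0 \<le> (real K - 1) * (3 * real \<phi> - 4)" using K1 \<phi>2 by simp
      have e2: "real \<phi> * (2 * real s + 6) = 2 * (real \<phi> * real s) + 6 * real \<phi>" by (simp add: algebra_simps)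
      have e3: "real \<phi> * (6 * 2 ^ K + real K) = 6 * (real \<phi> * 2 ^ K) + real \<phi> * real K" by (simp add: algebra_simps)
      have e4: "(real K - 1) * (3 * real \<phi> - 4) = 3 * (real \<phi> * real K) - 4 * real K - 3 * real \<phi> + 4"
        by (simp add: algebra_simps)
      have e5: "(3 * 2 ^ K + 2 * real K - 3) * real \<phi> = 3 * (real \<phi> * 2 ^ K) + 2 * (real \<phi> * real K) - 3 * real \<phi>"
        by (simp add: algebra_simps)
      have h2': "2 * (real \<phi> * real s) + 6 * real \<phi> \<le> 6 * (real \<phi> * 2 ^ K) + real \<phi> * real K"
        using h2 unfolding e2 e3 .
      have h3': "0 \<le> 3 * (real \<phi> * real K) - 4 * real K - 3 * real \<phi> + 4" using h3 unfolding e4 .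
      show ?thesis unfolding e5
        using h1 h2' h3' tbr Lr \<phi>2 by linarith
    qed
    show ?thesis using goal unfolding hn logk log\<phi> by simp
  qed
  show ?thesis using wf ev layers width hidden by blast
qed


end
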